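(* Let $f:(\mathbb{C}^3,0)\to(\mathbb{C}^3,0)$ be a simple corner $$f=(x+x^ay^bz^c\,x(\lambda+P),\; y+x^ay^bz^c\,y(\mu+Q),\; z+x^ay^bz^c\,R),$$ and write $R=\alpha x+\beta y+\gamma z+O(\mathfrak{m}^2)$, with $\alpha=\beta=0$ if $c>0$. Then the singular directions of $f$ are: - $[\lambda-\gamma:0:\alpha]$, if $\alpha$ and $\lambda-\gamma$ are not both zero; - $[p:0:r]$ for all $[p:r]\in\mathbb{P}^1$, if $\alpha=\lambda-\gamma=0$; - $[0:\mu-\gamma:\beta]$, if $\beta$ and $\mu-\gamma$ are not both zero; - $[0:q:r]$ for all $[q:r]\in\mathbb{P}^1$, if $\beta=\mu-\gamma=0$; - $[0:0:1]$. All these directions are exceptional, and at each of the corresponding points of the exceptional divisor of the blow-up of the origin, the lift of $f$ is a simple corner.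
   Context: In the form of $f$: $a,b\in\mathbb{N}^*$, $c\in\mathbb{N}$, $\lambda\in\mathbb{C}^*$, $\mu\in\mathbb{C}\setminus\lambda\mathbb{Q}_{>0}$, $P,Q,R\in\mathfrak{m}$ (the maximal ideal at $0$), and $z\mid R$ if $c>0$. A germ is called a simple corner if it has this form in some local coordinates. Singular directions are taken with respect to $\ell=x^ay^bz^c$: $v$ is singular if $H_\ell(v)=\lambda' v$ for some $\lambda'$, where $H_\ell$ is the homogeneous part of smallest degree of $\ell^{-1}(f-\mathrm{id})$. A direction is exceptional if it is tangent to the divisor $\{x^ay^bz^c=0\}$. *)

theory Defs
  imports "HOL-Analysis.Analysis"
begin

type_synonym c3 = "complex \<times> complex \<times> complex"

definition smul3 :: "complex \<Rightarrow> c3 \<Rightarrow> c3" where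
  "smul3 t v = (t * fst v, t * fst (snd v), t * snd (snd v))"

definition comp3 :: "nat \<Rightarrow> c3 \<Rightarrow> complex" where
  "comp3 i v = (if i = 1 then fst v else if i = 2 then fst (snd v) else snd (snd v))"

definition holo3 :: "c3 set \<Rightarrow> (c3 \<Rightarrow> complex) \<Rightarrow> bool" where
  "holo3 U g \<longleftrightarrow> open U \<and> (\<forall>p\<in>U. \<exists>D. (g has_derivative D) (at p) \<and>
      (\<forall>c w. D (smul3 c w) = c * D w))"

definition holo3map :: "c3 set \<Rightarrow> (c3 \<Rightarrow> c3) \<Rightarrow> bool" where
  "holo3map U h \<longleftrightarrow> holo3 U (\<lambda>p. fst (h p)) \<and> holo3 U (\<lambda>p. fst (snd (h p)))
      \<and> holo3 U (\<lambda>p. snd (snd (h p)))"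

definition simple_corner_form ::
  "(c3 \<Rightarrow> c3) \<Rightarrow> nat \<Rightarrow> nat \<Rightarrow> nat \<Rightarrow> complex \<Rightarrow> complex \<Rightarrow>
   (c3 \<Rightarrow> complex) \<Rightarrow> (c3 \<Rightarrow> complex) \<Rightarrow> (c3 \<Rightarrow> complex) \<Rightarrow> c3 set \<Rightarrow> bool" where
  "simple_corner_form f a b c lam mu P Q R U \<longleftrightarrow>
     open U \<and> 0 \<in> U \<and> a > 0 \<and> b > 0 \<and> lam \<noteq> 0 \<and>
     \<not> (\<exists>r::rat. r > 0 \<and> mu = lam * of_rat r) \<and>
     holo3 U P \<and> holo3 U Q \<and> holo3 U R \<and> P 0 = 0 \<and> Q 0 = 0 \<and> R 0 = 0 \<and>
     (c > 0 \<longrightarrow> (\<exists>R'. holo3 U R' \<and> (\<forall>p\<in>U. R p = snd (snd p) * R' p))) \<and>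
     (\<forall>x y z. (x, y, z) \<in> U \<longrightarrow>
        f (x, y, z) = (x + x^a * y^b * z^c * x * (lam + P (x, y, z)),
                       y + x^a * y^b * z^c * y * (mu + Q (x, y, z)),
                       z + x^a * y^b * z^c * R (x, y, z)))"

definition is_simple_corner0 :: "(c3 \<Rightarrow> c3) \<Rightarrow> c3 set \<Rightarrow> bool" where
  "is_simple_corner0 h U \<longleftrightarrow> (\<exists>a b c lam mu P Q R. simple_corner_form h a b c lam mu P Q R U)"

definition simple_corner_at :: "(c3 \<Rightarrow> c3) \<Rightarrow> c3 \<Rightarrow> bool" where
  "simple_corner_at g q \<longleftrightarrow> (\<exists>\<psi> V W U. open V \<and> open W \<and> 0 \<in> V \<and> \<psi> 0 = q \<and>
      bij_betw \<psi> V W \<and> holo3map V \<psi> \<and> holo3map W (inv_into V \<psi>) \<and>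
      U \<subseteq> V \<and> (\<forall>p\<in>U. g (\<psi> p) \<in> W) \<and>
      is_simple_corner0 (\<lambda>p. inv_into V \<psi> (g (\<psi> p))) U)"

text \<open>Homogeneous part of degree k of a holomorphic germ at 0, evaluated at v:
  the k-th Taylor coefficient of t \<mapsto> G(t v).\<close>
definition hom_part1 :: "nat \<Rightarrow> (c3 \<Rightarrow> complex) \<Rightarrow> c3 \<Rightarrow> complex" where
  "hom_part1 k g v = (deriv ^^ k) (\<lambda>t. g (smul3 t v)) 0 / fact k"

definition hom_part :: "nat \<Rightarrow> (c3 \<Rightarrow> c3) \<Rightarrow> c3 \<Rightarrow> c3" where
  "hom_part k G v = (hom_part1 k (\<lambda>p. fst (G p)) v, hom_part1 k (\<lambda>p. fst (snd (G p))) v,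
                     hom_part1 k (\<lambda>p. snd (snd (G p))) v)"

definition lowest_hom :: "(c3 \<Rightarrow> c3) \<Rightarrow> c3 \<Rightarrow> c3" where
  "lowest_hom G = hom_part (LEAST k. \<exists>v. hom_part k G v \<noteq> 0) G"

text \<open>Singular direction (represented by a nonzero vector) of f w.r.t. \<ell>:
  H_\<ell> is the lowest homogeneous part of the holomorphic germ G = \<ell>^{-1}(f - id).\<close>
definition sing_dir :: "(c3 \<Rightarrow> c3) \<Rightarrow> (c3 \<Rightarrow> complex) \<Rightarrow> c3 \<Rightarrow> bool" where
  "sing_dir f l v \<longleftrightarrow> v \<noteq> 0 \<and> (\<exists>G U. open U \<and> 0 \<in> U \<and> holo3map U G \<and>
      (\<forall>p\<in>U. f p - p = smul3 (l p) (G p)) \<and> (\<exists>l'. lowest_hom G v = smul3 l' v))"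

definition proj_eq :: "c3 \<Rightarrow> c3 \<Rightarrow> bool" where
  "proj_eq v w \<longleftrightarrow> (\<exists>t. t \<noteq> 0 \<and> v = smul3 t w)"

text \<open>Tangent to the divisor {x^a y^b z^c = 0}.\<close>
definition exceptional :: "nat \<Rightarrow> nat \<Rightarrow> nat \<Rightarrow> c3 \<Rightarrow> bool" where
  "exceptional a b c v \<longleftrightarrow> (a > 0 \<and> fst v = 0) \<or> (b > 0 \<and> fst (snd v) = 0)
      \<or> (c > 0 \<and> snd (snd v) = 0)"

definition blow_chart :: "nat \<Rightarrow> c3 \<Rightarrow> c3" where
  "blow_chart i p = (let (s, u, w) = p in
     if i = 1 then (s, s * u, s * w) else if i = 2 then (s * u, u, u * w)
     else (s * w, u * w, w))"

text \<open>Point of the exceptional divisor corresponding to direction v in chart i (v_i \<noteq> 0).\<close>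
definition chart_point :: "nat \<Rightarrow> c3 \<Rightarrow> c3" where
  "chart_point i v = (let (v1, v2, v3) = v in
     if i = 1 then (0, v2 / v1, v3 / v1) else if i = 2 then (v1 / v2, 0, v3 / v2)
     else (v1 / v3, v2 / v3, 0))"

definition lift_simple_corner_at :: "(c3 \<Rightarrow> c3) \<Rightarrow> nat \<Rightarrow> c3 \<Rightarrow> bool" where
  "lift_simple_corner_at f i q \<longleftrightarrow> (\<exists>g U. open U \<and> q \<in> U \<and> holo3map U g \<and>
      (\<forall>p\<in>U. blow_chart i (g p) = f (blow_chart i p)) \<and> simple_corner_at g q)"

end

theory Submission
  imports Defs "HOL-Complex_Analysis.Cauchy_Integral_Formula"
begin
definition hd3 :: "(c3 \<Rightarrow> complex) \<Rightarrow> (c3 \<Rightarrow> complex) \<Rightarrow> c3 \<Rightarrow> bool" where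
  "hd3 g D p \<longleftrightarrow> (g has_derivative D) (at p) \<and> (\<forall>c w. D (smul3 c w) = c * D w)"

lemma holo3_hd3: "holo3 U g \<longleftrightarrow> open U \<and> (\<forall>p\<in>U. \<exists>D. hd3 g D p)"
  unfolding holo3_def hd3_def by blast

lemma smul3_simps[simp]: "fst (smul3 c w) = c * fst w" "fst (snd (smul3 c w)) = c * fst (snd w)"
  "snd (snd (smul3 c w)) = c * snd (snd w)"
  by (auto simp: smul3_def)

lemma hd3_const: "hd3 (\<lambda>p. k) (\<lambda>h. 0) p"
  by (auto simp: hd3_def)
lemma hd3_c1: "hd3 (\<lambda>p. fst p) (\<lambda>h. fst h) p"
  by (auto simp: hd3_def intro!: derivative_eq_intros)
lemma hd3_c2: "hd3 (\<lambda>p. fst (snd p)) (\<lambda>h. fst (snd h)) p"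
  by (auto simp: hd3_def intro!: derivative_eq_intros)
lemma hd3_c3: "hd3 (\<lambda>p. snd (snd p)) (\<lambda>h. snd (snd h)) p"
  by (auto simp: hd3_def intro!: derivative_eq_intros)
lemma hd3_add: "hd3 f Df p \<Longrightarrow> hd3 g Dg p \<Longrightarrow> hd3 (\<lambda>p. f p + g p) (\<lambda>h. Df h + Dg h) p"
  by (auto simp: hd3_def algebra_simps intro!: derivative_eq_intros)
lemma hd3_diff: "hd3 f Df p \<Longrightarrow> hd3 g Dg p \<Longrightarrow> hd3 (\<lambda>p. f p - g p) (\<lambda>h. Df h - Dg h) p"
  by (auto simp: hd3_def algebra_simps intro!: derivative_eq_intros)
lemma hd3_mult: "hd3 f Df p \<Longrightarrow> hd3 g Dg p \<Longrightarrow> hd3 (\<lambda>p. f p * g p) (\<lambda>h. f p * Dg h + Df h * g p) p"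
  unfolding hd3_def apply (intro conjI)
   apply (rule has_derivative_mult; simp)
  by (simp add: algebra_simps)
lemma hd3_inverse: "hd3 f Df p \<Longrightarrow> f p \<noteq> 0 \<Longrightarrow>
   hd3 (\<lambda>p. inverse (f p)) (\<lambda>h. - (inverse (f p) * Df h * inverse (f p))) p"
  unfolding hd3_def apply (intro conjI)
   apply (rule Deriv.has_derivative_inverse; simp)
  by (simp add: algebra_simps)
lemma hd3_comp:
  assumes "hd3 f1 D1 p" "hd3 f2 D2 p" "hd3 f3 D3 p" "hd3 g Dg (f1 p, f2 p, f3 p)"
  shows "hd3 (\<lambda>p. g (f1 p, f2 p, f3 p)) (\<lambda>h. Dg (D1 h, D2 h, D3 h)) p"
proof -
  have "((\<lambda>p. (f1 p, f2 p, f3 p)) has_derivative (\<lambda>h. (D1 h, D2 h, D3 h))) (at p)"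
    using assms unfolding hd3_def by (auto intro!: has_derivative_Pair)
  from has_derivative_compose[OF this] assms(4)
  have "((\<lambda>p. g (f1 p, f2 p, f3 p)) has_derivative (\<lambda>h. Dg (D1 h, D2 h, D3 h))) (at p)"
    unfolding hd3_def by blast
  moreover have "Dg (D1 (smul3 c w), D2 (smul3 c w), D3 (smul3 c w)) = c * Dg (D1 w, D2 w, D3 w)" for c w
  proof -
    have "(D1 (smul3 c w), D2 (smul3 c w), D3 (smul3 c w)) = smul3 c (D1 w, D2 w, D3 w)"
      using assms unfolding hd3_def by (simp add: smul3_def)
    then show ?thesis using assms(4) unfolding hd3_def by simp
  qed
  ultimately show ?thesis unfolding hd3_def by blast
qed

lemma holo3_open: "holo3 U g \<Longrightarrow> open U" by (simp add: holo3_def)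

lemma holo3I: "open U \<Longrightarrow> (\<And>p. p \<in> U \<Longrightarrow> \<exists>D. hd3 g D p) \<Longrightarrow> holo3 U g"
  by (auto simp: holo3_hd3)
lemma holo3D: "holo3 U g \<Longrightarrow> p \<in> U \<Longrightarrow> \<exists>D. hd3 g D p"
  by (auto simp: holo3_hd3)

lemma holo3_const[simp]: "open U \<Longrightarrow> holo3 U (\<lambda>p. k)"
  by (auto intro!: holo3I hd3_const)
lemma holo3_c1: "open U \<Longrightarrow> holo3 U (\<lambda>p. fst p)"
  by (auto intro!: holo3I hd3_c1)
lemma holo3_c2: "open U \<Longrightarrow> holo3 U (\<lambda>p. fst (snd p))"
  by (auto intro!: holo3I hd3_c2)
lemma holo3_c3: "open U \<Longrightarrow> holo3 U (\<lambda>p. snd (snd p))"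
  by (auto intro!: holo3I hd3_c3)
lemma holo3_add: "holo3 U f \<Longrightarrow> holo3 U g \<Longrightarrow> holo3 U (\<lambda>p. f p + g p)"
  by (rule holo3I, simp add: holo3_open) (metis holo3D hd3_add)
lemma holo3_diff: "holo3 U f \<Longrightarrow> holo3 U g \<Longrightarrow> holo3 U (\<lambda>p. f p - g p)"
  by (rule holo3I, simp add: holo3_open) (metis holo3D hd3_diff)
lemma holo3_mult: "holo3 U f \<Longrightarrow> holo3 U g \<Longrightarrow> holo3 U (\<lambda>p. f p * g p)"
  by (rule holo3I, simp add: holo3_open) (metis holo3D hd3_mult)
lemma holo3_inverse: "holo3 U f \<Longrightarrow> (\<And>p. p \<in> U \<Longrightarrow> f p \<noteq> 0) \<Longrightarrow> holo3 U (\<lambda>p. inverse (f p))"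
  by (rule holo3I, simp add: holo3_open) (metis holo3D hd3_inverse)
lemma holo3_divide: "holo3 U f \<Longrightarrow> holo3 U g \<Longrightarrow> (\<And>p. p \<in> U \<Longrightarrow> g p \<noteq> 0) \<Longrightarrow> holo3 U (\<lambda>p. f p / g p)"
  using holo3_mult[OF _ holo3_inverse, of U f g] by (simp add: divide_inverse)
lemma holo3_power: "holo3 U f \<Longrightarrow> holo3 U (\<lambda>p. f p ^ n)"
  by (induction n) (auto simp: holo3_open intro!: holo3_mult)
lemma holo3_comp:
  assumes "holo3 V f1" "holo3 V f2" "holo3 V f3" "holo3 W g" "\<And>p. p \<in> V \<Longrightarrow> (f1 p, f2 p, f3 p) \<in> W"
  shows "holo3 V (\<lambda>p. g (f1 p, f2 p, f3 p))"
proof (rule holo3I)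
  show "open V" using assms(1) by (simp add: holo3_open)
  fix p assume p: "p \<in> V"
  obtain D1 D2 D3 Dg where "hd3 f1 D1 p" "hd3 f2 D2 p" "hd3 f3 D3 p" "hd3 g Dg (f1 p, f2 p, f3 p)"
    using holo3D[OF assms(1) p] holo3D[OF assms(2) p] holo3D[OF assms(3) p] holo3D[OF assms(4) assms(5)[OF p]]
    by blast
  from hd3_comp[OF this] show "\<exists>D. hd3 (\<lambda>p. g (f1 p, f2 p, f3 p)) D p" by blast
qed
lemma holo3_subset: "holo3 U g \<Longrightarrow> open V \<Longrightarrow> V \<subseteq> U \<Longrightarrow> holo3 V g"
  by (auto simp: holo3_hd3)
lemma holo3_cong: "holo3 U g \<Longrightarrow> (\<And>p. p \<in> U \<Longrightarrow> g p = g' p) \<Longrightarrow> holo3 U g'"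
  unfolding holo3_hd3 hd3_def
  by (metis has_derivative_transform_within_open)
lemma holo3_continuous: "holo3 U g \<Longrightarrow> continuous_on U g"
  unfolding holo3_hd3 hd3_def
  by (metis at_within_open continuous_on_eq_continuous_within has_derivative_continuous)

lemma hd3_line:
  assumes "hd3 g D (p + smul3 t v)"
  shows "((\<lambda>t. g (p + smul3 t v)) has_field_derivative D v) (at t)"
proof -
  have "((\<lambda>t. p + smul3 t v) has_derivative (\<lambda>h. smul3 h v)) (at t)"
    unfolding smul3_def by (auto intro!: derivative_eq_intros)
  from has_derivative_compose[OF this] assms
  have "((\<lambda>t. g (p + smul3 t v)) has_derivative (\<lambda>h. D (smul3 h v))) (at t)"
    unfolding hd3_def by blast
  moreover have "(\<lambda>h. D (smul3 h v)) = (*) (D v)" using assms unfolding hd3_def fun_eq_iff by (metis mult.commute)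
  ultimately show ?thesis unfolding has_field_derivative_def by simp
qed

lemma hd3_linear_decomp:
  assumes "hd3 g D p"
  shows "D v = fst v * D (1,0,0) + fst (snd v) * D (0,1,0) + snd (snd v) * D (0,0,1)"
proof -
  have lin: "linear D" using assms unfolding hd3_def by (auto dest: has_derivative_linear)
  have h: "D (smul3 c w) = c * D w" for c w using assms unfolding hd3_def by blast
  obtain x y z where v: "v = (x,y,z)" by (cases v) auto
  have "v = smul3 x (1,0,0) + smul3 y (0,1,0) + smul3 z (0,0,1)"
    by (simp add: v smul3_def)
  then have "D v = D (smul3 x (1,0,0)) + D (smul3 y (0,1,0)) + D (smul3 z (0,0,1))"
    by (metis lin linear_add)
  then show ?thesis by (simp add: h v)
qed

lemma norm_c3_le: "norm ((a,b,c)::c3) \<le> cmod a + cmod b + cmod c"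
  by (metis add.assoc add_left_mono norm_Pair_le order_trans)

lemma hd3_holo_line:
  assumes H: "holo3 \<Omega> H" and sub: "\<And>\<zeta>. \<zeta> \<in> S \<Longrightarrow> p + smul3 \<zeta> e \<in> \<Omega>"
  shows "(\<lambda>\<zeta>. H (p + smul3 \<zeta> e)) holomorphic_on S"
  unfolding holomorphic_on_def field_differentiable_def
proof
  fix \<zeta> assume "\<zeta> \<in> S"
  then obtain D where "hd3 H D (p + smul3 \<zeta> e)" using holo3D[OF H sub] by blast
  from hd3_line[OF this] show "\<exists>f'. ((\<lambda>\<zeta>. H (p + smul3 \<zeta> e)) has_field_derivative f') (at \<zeta> within S)"
    by (blast intro: has_field_derivative_at_within)
qed

lemma circ_ne0: "r > 0 \<Longrightarrow> circlepath 0 r t \<noteq> 0"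
  by (simp add: circlepath)
lemma circ_norm: "r > 0 \<Longrightarrow> cmod (circlepath 0 r t) = r"
  by (simp add: circlepath norm_mult)
lemma circ_cont: "continuous_on S (circlepath 0 r)"
  unfolding circlepath by (intro continuous_intros)

lemma pd_cont:
  assumes H: "holo3 \<Omega> H" and e: "\<And>c. norm (smul3 c e) = cmod c"
  shows "continuous_on \<Omega> (\<lambda>p. deriv (\<lambda>\<zeta>. H (p + smul3 \<zeta> e)) 0)"
proof -
  have oO: "open \<Omega>" using H holo3_open by blast
  have Hc: "continuous_on \<Omega> H" using H holo3_continuous by blast
  show ?thesis unfolding continuous_on_eq_continuous_at[OF oO]
  proof
    fix p0 assume "p0 \<in> \<Omega>"
    then obtain \<delta> where d: "\<delta> > 0" "ball p0 \<delta> \<subseteq> \<Omega>" using oO openE by blast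
    define \<rho> where "\<rho> = \<delta> / 2"
    have rho: "\<rho> > 0" using d by (simp add: \<rho>_def)
    let ?B = "ball p0 \<rho>"
    have inO: "p + smul3 \<zeta> e \<in> \<Omega>" if "p \<in> ?B" "cmod \<zeta> \<le> \<rho>" for p \<zeta>
    proof -
      have "dist p0 (p + smul3 \<zeta> e) \<le> dist p0 p + norm (smul3 \<zeta> e)"
        by (metis add_diff_cancel_left' dist_norm dist_triangle2 norm_minus_commute dist_commute)
      also have "\<dots> < \<delta>" using that e by (simp add: \<rho>_def)
      finally show ?thesis using d by auto
    qed
    define K where "K = (\<lambda>p t. H (p + smul3 (circlepath 0 \<rho> t) e) / (circlepath 0 \<rho> t)^2 *
                         (2 * pi * \<i> * \<rho> * exp(2 * of_real pi * \<i> * t)))"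
    have eq: "deriv (\<lambda>\<zeta>. H (p + smul3 \<zeta> e)) 0 = 1 / (2 * of_real pi * \<i>) * integral (cbox 0 1) (K p)"
      if p: "p \<in> ?B" for p
    proof -
      let ?F = "\<lambda>\<zeta>. H (p + smul3 \<zeta> e)"
      have hc: "?F holomorphic_on cball 0 \<rho>"
        by (rule hd3_holo_line[OF H]) (use inO p in auto)
      have "(?F has_field_derivative (1 / (2 * of_real pi * \<i>) * contour_integral (circlepath 0 \<rho>) (\<lambda>u. ?F u / (u-0)^2))) (at 0)"
        by (rule Cauchy_derivative_integral_circlepath(2))
           (use hc rho in \<open>auto intro: holomorphic_on_imp_continuous_on holomorphic_on_subset\<close>)
      then have "deriv ?F 0 = 1 / (2 * of_real pi * \<i>) * contour_integral (circlepath 0 \<rho>) (\<lambda>u. ?F u / (u-0)^2)"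
        by (rule DERIV_imp_deriv)
      also have "contour_integral (circlepath 0 \<rho>) (\<lambda>u. ?F u / (u-0)^2) = integral (cbox 0 1) (K p)"
        unfolding contour_integral_integral vector_derivative_circlepath K_def cbox_interval by simp
      finally show ?thesis .
    qed
    have "continuous_on ?B (\<lambda>p. integral (cbox 0 1) (K p))"
    proof (rule integral_continuous_on_param)
      show "continuous_on (?B \<times> cbox 0 1) (\<lambda>(p, t). K p t)"
        unfolding K_def split_beta
      proof (intro continuous_intros)
        show "continuous_on (?B \<times> cbox 0 1) (\<lambda>x. H (fst x + smul3 (circlepath 0 \<rho> (snd x)) e))"
        proof (rule continuous_on_compose2[OF Hc])
          show "continuous_on (?B \<times> cbox 0 1) (\<lambda>x. fst x + smul3 (circlepath 0 \<rho> (snd x)) e)"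
            unfolding smul3_def circlepath by (intro continuous_intros)
          show "(\<lambda>x. fst x + smul3 (circlepath 0 \<rho> (snd x)) e) ` (?B \<times> cbox 0 1) \<subseteq> \<Omega>"
            using inO circ_norm[OF rho] by auto
        qed
        show "continuous_on (?B \<times> cbox 0 1) (\<lambda>x. circlepath 0 \<rho> (snd x))"
          unfolding circlepath by (intro continuous_intros)
      qed (use circ_ne0[OF rho] in auto)
    qed
    then have "continuous_on ?B (\<lambda>p. 1 / (2 * of_real pi * \<i>) * integral (cbox 0 1) (K p))"
      by (intro continuous_intros)
    then have "continuous_on ?B (\<lambda>p. deriv (\<lambda>\<zeta>. H (p + smul3 \<zeta> e)) 0)"
      by (rule continuous_on_eq) (use eq in auto)
    then show "isCont (\<lambda>p. deriv (\<lambda>\<zeta>. H (p + smul3 \<zeta> e)) 0) p0"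
      using continuous_on_eq_continuous_at[of ?B] rho by (meson centre_in_ball open_ball)
  qed
qed

definition lin3 :: "complex \<Rightarrow> complex \<Rightarrow> complex \<Rightarrow> c3 \<Rightarrow>\<^sub>L complex" where
  "lin3 a b c = (blinfun_mult_right a o\<^sub>L fst_blinfun) + (blinfun_mult_right b o\<^sub>L (fst_blinfun o\<^sub>L snd_blinfun))
     + (blinfun_mult_right c o\<^sub>L (snd_blinfun o\<^sub>L snd_blinfun))"

lemma lin3_apply[simp]: "blinfun_apply (lin3 a b c) v = a * fst v + b * fst (snd v) + c * snd (snd v)"
  by (simp add: lin3_def blinfun.add_left)

lemma lin3_cont[continuous_intros]:
  "continuous_on S f \<Longrightarrow> continuous_on S g \<Longrightarrow> continuous_on S h \<Longrightarrow>
   continuous_on S (\<lambda>x. lin3 (f x) (g x) (h x))"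
  unfolding lin3_def by (intro continuous_intros)

lemma smul3_zero[simp]: "smul3 0 v = 0"
  by (simp add: smul3_def zero_prod_def)

lemma pd_eq: "hd3 H D q \<Longrightarrow> deriv (\<lambda>\<zeta>. H (q + smul3 \<zeta> e)) 0 = D e"
  using hd3_line[of H D q 0 e] by (simp add: DERIV_imp_deriv)

lemma div3:
  assumes H: "holo3 \<Omega> H" and z0: "(s0,u0,0) \<in> \<Omega>"
    and Z: "\<And>s u. (s,u,0) \<in> \<Omega> \<Longrightarrow> H (s,u,0) = 0"
  shows "\<exists>V k. open V \<and> (s0,u0,0) \<in> V \<and> V \<subseteq> \<Omega> \<and> holo3 V k \<and> (\<forall>p\<in>V. H p = snd (snd p) * k p)"
proof -
  have oO: "open \<Omega>" using H holo3_open by blast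
  have Hc: "continuous_on \<Omega> H" using H holo3_continuous by blast
  obtain \<delta> where d: "\<delta> > 0" "ball (s0,u0,0) \<delta> \<subseteq> \<Omega>" using oO z0 openE by blast
  define \<rho> where "\<rho> = \<delta> / 5"
  have rho: "\<rho> > 0" using d by (simp add: \<rho>_def)
  define V where "V = ball s0 \<rho> \<times> ball u0 \<rho> \<times> ball (0::complex) \<rho>"
  have oV: "open V" unfolding V_def by (intro open_Times open_ball)
  have cV: "convex V" unfolding V_def by (intro convex_Times convex_ball)
  have z0V: "(s0,u0,0) \<in> V" unfolding V_def using rho by auto
  have inO: "(s,u,\<zeta>) \<in> \<Omega>" if "s \<in> ball s0 \<rho>" "u \<in> ball u0 \<rho>" "cmod \<zeta> \<le> 2*\<rho>" for s u \<zeta>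
  proof -
    have "dist (s0,u0,0) (s,u,\<zeta>) = norm ((s0 - s, u0 - u, - \<zeta>)::c3)"
      by (simp add: dist_norm)
    also have "\<dots> \<le> cmod (s0 - s) + cmod (u0 - u) + cmod (-\<zeta>)" by (rule norm_c3_le)
    also have "\<dots> < \<delta>" using that d(1) by (simp add: dist_norm \<rho>_def)
    finally show ?thesis using d by auto
  qed
  have VO: "V \<subseteq> \<Omega>"
  proof
    fix p assume "p \<in> V"
    then obtain s u w where "p = (s,u,w)" "s \<in> ball s0 \<rho>" "u \<in> ball u0 \<rho>" "cmod w < \<rho>"
      unfolding V_def by (auto simp: dist_norm)
    then show "p \<in> \<Omega>" using inO[of s u w] rho by auto
  qed
  define \<gamma> where "\<gamma> = circlepath 0 (2*\<rho>)"
  have r2: "2*\<rho> > 0" using rho by simp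
  have gn: "cmod (\<gamma> t) = 2*\<rho>" for t unfolding \<gamma>_def using circ_norm[OF r2] .
  have gne: "\<gamma> t - w \<noteq> 0" if "cmod w < \<rho>" for t w
    using gn[of t] that rho by (metis diff_eq_eq  less_irrefl add_0 linorder_not_le  mult_2 less_add_same_cancel1 order.strict_trans2 order_less_imp_le)
  have g0: "\<gamma> t \<noteq> 0" for t using gn[of t] rho by auto
  define f where "f = (\<lambda>(x::c3) t. H (fst x, fst (snd x), \<gamma> t) / (\<gamma> t - snd (snd x)))"
  define k where "k = (\<lambda>x. integral (cbox 0 1) (f x))"
  have ident: "H p = snd (snd p) * k p" if "p \<in> V" for p
  proof -
    obtain s u w where p: "p = (s,u,w)" and su: "s \<in> ball s0 \<rho>" "u \<in> ball u0 \<rho>" and w: "cmod w < \<rho>"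
      using \<open>p \<in> V\<close> unfolding V_def by (auto simp: dist_norm)
    show ?thesis
    proof (cases "w = 0")
      case True then show ?thesis using Z[of s u] inO[of s u 0] su p rho by auto
    next
      case False
      let ?F = "\<lambda>\<zeta>. H (s,u,\<zeta>)"
      have "(\<lambda>\<zeta>. H ((s,u,0) + smul3 \<zeta> (0,0,1))) holomorphic_on cball 0 (2*\<rho>)"
        by (rule hd3_holo_line[OF H]) (use inO su in \<open>auto simp: smul3_def\<close>)
      then have hol: "?F holomorphic_on cball 0 (2*\<rho>)" by (simp add: smul3_def)
      have cauchy: "((\<lambda>t. ?F (\<gamma> t) / (\<gamma> t - v) * (2 * of_real pi * \<i> * \<gamma> t)) has_integral (2 * of_real pi * \<i> * ?F v)) {0..1}"
        if v: "cmod v < 2*\<rho>" for v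
      proof -
        have "((\<lambda>\<zeta>. ?F \<zeta> / (\<zeta> - v)) has_contour_integral (2 * of_real pi * \<i> * ?F v)) \<gamma>"
          unfolding \<gamma>_def
          by (rule Cauchy_integral_circlepath)
             (use hol v in \<open>auto intro: holomorphic_on_imp_continuous_on holomorphic_on_subset\<close>)
        then show ?thesis unfolding has_contour_integral_def
          by (rule has_integral_eq[rotated]) (simp add: \<gamma>_def vector_derivative_circlepath01, simp add: circlepath)
      qed
      have c1: "cmod w < 2*\<rho>" "cmod (0::complex) < 2*\<rho>" using w rho by auto
      have F0: "?F 0 = 0" using Z[of s u] inO[of s u 0] su rho by auto
      have val: "1 / (2 * of_real pi * \<i>) * (2 * of_real pi * \<i> * ?F w - 2 * of_real pi * \<i> * ?F 0) = ?F w"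
        using F0 by simp
      have I: "((\<lambda>t. 1 / (2 * of_real pi * \<i>) * (?F (\<gamma> t) / (\<gamma> t - w) * (2 * of_real pi * \<i> * \<gamma> t)
               - ?F (\<gamma> t) / (\<gamma> t - 0) * (2 * of_real pi * \<i> * \<gamma> t)))
          has_integral (1 / (2 * of_real pi * \<i>) * (2 * of_real pi * \<i> * ?F w - 2 * of_real pi * \<i> * ?F 0))) {0..1}"
        by (intro has_integral_mult_right has_integral_diff cauchy c1)
      have "((\<lambda>t. w * f p t) has_integral ?F w) {0..1}"
        using I[unfolded val] apply (rule has_integral_eq[rotated])
        using gne[OF w] g0 by (auto simp: f_def p field_simps)
      then have "integral (cbox 0 1) (\<lambda>t. w * f p t) = ?F w"
        unfolding cbox_interval using integral_unique by blast
      then show ?thesis by (simp add: k_def p)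
    qed
  qed
  define e1 where "e1 = ((1,0,0)::c3)"
  define e2 where "e2 = ((0,1,0)::c3)"
  define pd where "pd e q = deriv (\<lambda>\<zeta>. H (q + smul3 \<zeta> e)) 0" for e q
  have pdc: "continuous_on \<Omega> (pd e1)" "continuous_on \<Omega> (pd e2)"
    unfolding pd_def by (rule pd_cont[OF H], simp add: e1_def e2_def smul3_def norm_Pair)+
  define q where "q x t = (fst x, fst (snd x), \<gamma> t)" for x :: c3 and t :: real
  have qO: "q x t \<in> \<Omega>" if "x \<in> V" for x t
    using that inO gn unfolding V_def q_def by auto
  have wV: "cmod (snd (snd x)) < \<rho>" if "x \<in> V" for x using that unfolding V_def by (auto simp: dist_norm)
  define fx where "fx x t = lin3 (pd e1 (q x t) / (\<gamma> t - snd (snd x))) (pd e2 (q x t) / (\<gamma> t - snd (snd x)))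
      (H (q x t) / (\<gamma> t - snd (snd x))^2)" for x t
  have hdf: "hd3 (\<lambda>x. f x t) (blinfun_apply (fx x t)) x" if xV: "x \<in> V" for x t
  proof -
    obtain DH where DH: "hd3 H DH (q x t)" using holo3D[OF H qO[OF xV]] by blast
    have A: "hd3 (\<lambda>y. H (fst y, fst (snd y), \<gamma> t)) (\<lambda>h. DH (fst h, fst (snd h), 0)) x"
      using hd3_comp[OF hd3_c1 hd3_c2 hd3_const, of H DH x "\<gamma> t"] DH by (simp add: q_def)
    have nz: "\<gamma> t - snd (snd x) \<noteq> 0" using gne wV[OF xV] by blast
    have B: "hd3 (\<lambda>y. inverse (\<gamma> t - snd (snd y)))
        (\<lambda>h. - (inverse (\<gamma> t - snd (snd x)) * (0 - snd (snd h)) * inverse (\<gamma> t - snd (snd x)))) x"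
      using hd3_inverse[OF hd3_diff[OF hd3_const hd3_c3]] nz by blast
    have C: "(\<lambda>x. f x t) = (\<lambda>y. H (fst y, fst (snd y), \<gamma> t) * inverse (\<gamma> t - snd (snd y)))"
      by (simp add: f_def divide_inverse fun_eq_iff)
    have D: "(\<lambda>h. H (fst x, fst (snd x), \<gamma> t) * (- (inverse (\<gamma> t - snd (snd x)) * (0 - snd (snd h)) * inverse (\<gamma> t - snd (snd x))))
               + DH (fst h, fst (snd h), 0) * inverse (\<gamma> t - snd (snd x))) = blinfun_apply (fx x t)"
    proof
      fix h :: c3
      have "DH (fst h, fst (snd h), 0) = fst h * DH e1 + fst (snd h) * DH e2"
        using hd3_linear_decomp[OF DH, of "(fst h, fst (snd h), 0)"] by (simp add: e1_def e2_def)
      moreover have "pd e1 (q x t) = DH e1" "pd e2 (q x t) = DH e2"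
        unfolding pd_def using pd_eq[OF DH] by auto
      moreover obtain d where dd: "d = \<gamma> t - snd (snd x)" by blast
      ultimately show "H (fst x, fst (snd x), \<gamma> t) * (- (inverse (\<gamma> t - snd (snd x)) * (0 - snd (snd h)) * inverse (\<gamma> t - snd (snd x))))
               + DH (fst h, fst (snd h), 0) * inverse (\<gamma> t - snd (snd x)) = blinfun_apply (fx x t) h"
        unfolding dd[symmetric] by (simp add: fx_def q_def dd[symmetric] divide_inverse power2_eq_square algebra_simps)
    qed
    show ?thesis using hd3_mult[OF A B] unfolding C D .
  qed
  have contq: "continuous_on (V \<times> cbox 0 1) (\<lambda>(x, t). q x t)"
    unfolding q_def \<gamma>_def circlepath split_beta by (intro continuous_intros)
  have gc: "continuous_on S (\<lambda>x. \<gamma> (snd x))" for S :: "(c3 \<times> real) set"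
    unfolding \<gamma>_def circlepath by (intro continuous_intros)
  have cont_fx: "continuous_on (V \<times> cbox 0 1) (\<lambda>(x, t). fx x t)"
    unfolding fx_def split_beta
  proof (intro continuous_intros)
    show "continuous_on (V \<times> cbox 0 1) (\<lambda>x. pd e1 (q (fst x) (snd x)))"
      by (rule continuous_on_compose2[OF pdc(1) contq[unfolded split_beta]]) (use qO in auto)
    show "continuous_on (V \<times> cbox 0 1) (\<lambda>x. pd e2 (q (fst x) (snd x)))"
      by (rule continuous_on_compose2[OF pdc(2) contq[unfolded split_beta]]) (use qO in auto)
    show "continuous_on (V \<times> cbox 0 1) (\<lambda>x. H (q (fst x) (snd x)))"
      by (rule continuous_on_compose2[OF Hc contq[unfolded split_beta]]) (use qO in auto)
    show "continuous_on (V \<times> cbox 0 1) (\<lambda>x. \<gamma> (snd x))"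
      unfolding \<gamma>_def circlepath by (intro continuous_intros)
  qed (use gne wV gc in auto)
  have contf: "continuous_on (cbox 0 1) (f x)" if "x \<in> V" for x
  proof -
    have "continuous_on (cbox 0 1) (\<lambda>t. H (q x t) / (\<gamma> t - snd (snd x)))"
    proof (intro continuous_intros)
      show "continuous_on (cbox 0 1) (\<lambda>t. H (q x t))"
        by (rule continuous_on_compose2[OF Hc]) (use qO[OF that] in \<open>auto simp: q_def \<gamma>_def circlepath intro!: continuous_intros\<close>)
      show "continuous_on (cbox 0 1) \<gamma>" unfolding \<gamma>_def circlepath by (intro continuous_intros)
    qed (use gne wV that in auto)
    then show ?thesis by (simp add: f_def q_def)
  qed
  have holk: "holo3 V k"
  proof (rule holo3I[OF oV])
    fix x0 assume x0: "x0 \<in> V"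
    have "(k has_derivative blinfun_apply (integral (cbox 0 1) (fx x0))) (at x0 within V)"
      unfolding k_def
    proof (rule leibniz_rule[OF _ _ cont_fx x0 cV])
      show "((\<lambda>x. f x t) has_derivative blinfun_apply (fx x t)) (at x within V)" if "x \<in> V" for x t
        using hdf[OF that, of t] unfolding hd3_def by (blast intro: has_derivative_at_withinI)
      show "f x integrable_on cbox 0 1" if "x \<in> V" for x
        using contf[OF that] by (rule integrable_continuous)
    qed
    then have d: "(k has_derivative blinfun_apply (integral (cbox 0 1) (fx x0))) (at x0)"
      using at_within_open[OF x0 oV] by simp
    have fxi: "fx x0 integrable_on cbox 0 1"
    proof (rule integrable_continuous)
      show "continuous_on (cbox 0 1) (fx x0)"
        by (rule continuous_on_compose2[OF cont_fx, where f="\<lambda>t. (x0, t)", simplified])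
           (use x0 in \<open>auto intro!: continuous_intros\<close>)
    qed
    have hom: "blinfun_apply (integral (cbox 0 1) (fx x0)) (smul3 c w) = c * blinfun_apply (integral (cbox 0 1) (fx x0)) w" for c w
    proof -
      have "\<And>t. blinfun_apply (fx x0 t) (smul3 c w) = c * blinfun_apply (fx x0 t) w"
        by (simp add: fx_def algebra_simps)
      then show ?thesis
        unfolding blinfun_apply_integral[OF fxi] by simp
    qed
    show "\<exists>D. hd3 k D x0" using d hom unfolding hd3_def by blast
  qed
  show ?thesis using oV z0V VO holk ident by blast
qed

lemma sc_parts:
  assumes "simple_corner_form f a b c lam mu P Q R U"
  shows "open U" "0 \<in> U" "a > 0" "b > 0" "lam \<noteq> 0" "\<not> (\<exists>r::rat. r > 0 \<and> mu = lam * of_rat r)"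
    "holo3 U P" "holo3 U Q" "holo3 U R" "P 0 = 0" "Q 0 = 0" "R 0 = 0"
    "c > 0 \<Longrightarrow> (\<exists>R'. holo3 U R' \<and> (\<forall>p\<in>U. R p = snd (snd p) * R' p))"
    "\<And>x y z. (x, y, z) \<in> U \<Longrightarrow>
        f (x, y, z) = (x + x^a * y^b * z^c * x * (lam + P (x, y, z)),
                       y + x^a * y^b * z^c * y * (mu + Q (x, y, z)),
                       z + x^a * y^b * z^c * R (x, y, z))"
  using assms unfolding simple_corner_form_def by blast+

lemma mu_ne_lam: "\<not> (\<exists>r::rat. r > 0 \<and> mu = lam * of_rat r) \<Longrightarrow> mu \<noteq> lam"
  by (metis mult.right_neutral of_rat_1 zero_less_one)

definition G0 :: "complex \<Rightarrow> complex \<Rightarrow> (c3 \<Rightarrow> complex) \<Rightarrow> (c3 \<Rightarrow> complex) \<Rightarrow> (c3 \<Rightarrow> complex) \<Rightarrow> c3 \<Rightarrow> c3" where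
  "G0 lam mu P Q R p = (fst p * (lam + P p), fst (snd p) * (mu + Q p), R p)"

lemma G0_holo:
  assumes "simple_corner_form f a b c lam mu P Q R U"
  shows "holo3map U (G0 lam mu P Q R)"
  using sc_parts[OF assms]
  by (auto simp: holo3map_def G0_def intro!: holo3_mult holo3_add holo3_c1 holo3_c2)

lemma G0_eq:
  assumes "simple_corner_form f a b c lam mu P Q R U" "p \<in> U"
  shows "f p - p = smul3 ((\<lambda>(x, y, z). x ^ a * y ^ b * z ^ c) p) (G0 lam mu P Q R p)"
  using sc_parts(14)[OF assms(1), of "fst p" "fst (snd p)" "snd (snd p)"] assms(2)
  by (cases p) (auto simp: G0_def smul3_def algebra_simps)

lemma holo3map_cont: "holo3map U G \<Longrightarrow> continuous_on U G"
proof -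
  assume "holo3map U G"
  then have "continuous_on U (\<lambda>p. fst (G p))" "continuous_on U (\<lambda>p. fst (snd (G p)))" "continuous_on U (\<lambda>p. snd (snd (G p)))"
    unfolding holo3map_def by (auto intro: holo3_continuous)
  then have "continuous_on U (\<lambda>p. (fst (G p), fst (snd (G p)), snd (snd (G p))))"
    by (intro continuous_on_Pair)
  then show ?thesis by simp
qed

lemma unique_G:
  fixes G G' :: "c3 \<Rightarrow> c3" and p :: c3
  assumes W: "open W" and G: "continuous_on W G" and G': "continuous_on W G'"
    and eq: "\<And>q. q \<in> W \<Longrightarrow> fst q \<noteq> 0 \<Longrightarrow> fst (snd q) \<noteq> 0 \<Longrightarrow> snd (snd q) \<noteq> 0 \<Longrightarrow> G q = G' q"
    and p: "p \<in> W"
  shows "G p = G' p"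
proof -
  define \<phi> where "\<phi> t = p + ((t, t, t)::c3)" for t :: complex
  have phic: "continuous_on UNIV \<phi>" unfolding \<phi>_def by (intro continuous_intros)
  have phi0: "\<phi> 0 = p" by (simp add: \<phi>_def zero_prod_def)
  have lim: "(\<phi> \<longlongrightarrow> p) (at 0)"
    using phic phi0 by (metis continuous_on_def UNIV_I)
  have evW: "eventually (\<lambda>t. \<phi> t \<in> W) (at 0)"
    using lim W p by (rule topological_tendstoD)
  have ev: "eventually (\<lambda>t. x + t \<noteq> 0) (at (0::complex))" for x :: complex
  proof (cases "x = 0")
    case True then show ?thesis by (simp add: eventually_at_filter)
  next
    case False
    have "((\<lambda>t. x + t) \<longlongrightarrow> x + 0) (at (0::complex))" by (intro tendsto_intros)
    then show ?thesis using False tendsto_imp_eventually_ne by auto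
  qed
  have E: "eventually (\<lambda>t. G (\<phi> t) = G' (\<phi> t)) (at 0)"
    using evW ev[of "fst p"] ev[of "fst (snd p)"] ev[of "snd (snd p)"]
    by eventually_elim (auto simp: \<phi>_def intro!: eq)
  have L1: "((\<lambda>t. G (\<phi> t)) \<longlongrightarrow> G p) (at 0)"
    using G p W lim evW by (metis continuous_on_eq_continuous_at isCont_tendsto_compose)
  have L2: "((\<lambda>t. G' (\<phi> t)) \<longlongrightarrow> G' p) (at 0)"
    using G' p W lim evW by (metis continuous_on_eq_continuous_at isCont_tendsto_compose)
  have L3: "((\<lambda>t. G' (\<phi> t)) \<longlongrightarrow> G p) (at 0)"
    using Lim_transform_eventually[OF L1 E] .
  show ?thesis using tendsto_unique[OF at_neq_bot L3 L2] .
qed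

definition Lin :: "complex \<Rightarrow> complex \<Rightarrow> complex \<Rightarrow> complex \<Rightarrow> complex \<Rightarrow> c3 \<Rightarrow> c3" where
  "Lin lam mu al be ga v = (lam * fst v, mu * fst (snd v), al * fst v + be * fst (snd v) + ga * snd (snd v))"

lemma smul3_cancel: "k \<noteq> 0 \<Longrightarrow> smul3 k x = smul3 k y \<Longrightarrow> x = y"
  by (cases x; cases y) (auto simp: smul3_def)

lemma hom_part0: "hom_part 0 G v = G 0"
  by (simp add: hom_part_def hom_part1_def zero_prod_def)

lemma hom_part1: "hom_part (Suc 0) G v = (deriv (\<lambda>t. fst (G (smul3 t v))) 0, deriv (\<lambda>t. fst (snd (G (smul3 t v)))) 0,
   deriv (\<lambda>t. snd (snd (G (smul3 t v)))) 0)"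
  by (simp add: hom_part_def hom_part1_def)

lemma hd3_line0: "hd3 g D 0 \<Longrightarrow> ((\<lambda>t. g (smul3 t v)) has_field_derivative D v) (at 0)"
  using hd3_line[of g D 0 0 v] by simp

lemma deriv_local:
  assumes "((\<lambda>t. g (smul3 t v)) has_field_derivative d) (at 0)" "open W" "0 \<in> W"
    "\<And>p. p \<in> W \<Longrightarrow> g p = g' p"
  shows "deriv (\<lambda>t. g' (smul3 t v)) 0 = d"
proof -
  have o: "open ((\<lambda>t. smul3 t v) -` W)"
    by (rule open_vimage[OF assms(2)]) (auto simp: smul3_def intro!: continuous_intros)
  have "((\<lambda>t. g' (smul3 t v)) has_field_derivative d) (at 0)"
    by (rule has_field_derivative_transform_within_open[OF assms(1) o]) (use assms in auto)
  then show ?thesis by (rule DERIV_imp_deriv)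
qed

lemma lowest_hom_eq:
  assumes SC: "simple_corner_form f a b c lam mu P Q R U"
    and U': "open U'" "0 \<in> U'" "holo3map U' G"
    and fG: "\<forall>p\<in>U'. f p - p = smul3 ((\<lambda>(x, y, z). x ^ a * y ^ b * z ^ c) p) (G p)"
  shows "lowest_hom G = Lin lam mu (deriv (\<lambda>t. R (t, 0, 0)) 0) (deriv (\<lambda>t. R (0, t, 0)) 0) (deriv (\<lambda>t. R (0, 0, t)) 0)"
proof -
  note sc = sc_parts[OF SC]
  define W where "W = U \<inter> U'"
  have oW: "open W" "0 \<in> W" using sc U' by (auto simp: W_def)
  have GG0: "G p = G0 lam mu P Q R p" if "p \<in> W" for p
  proof (rule unique_G[OF oW(1) _ _ _ that])
    show "continuous_on W G" using holo3map_cont[OF U'(3)] by (rule continuous_on_subset) (auto simp: W_def)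
    show "continuous_on W (G0 lam mu P Q R)" using holo3map_cont[OF G0_holo[OF SC]] by (rule continuous_on_subset) (auto simp: W_def)
    fix q assume q: "q \<in> W" "fst q \<noteq> 0" "fst (snd q) \<noteq> 0" "snd (snd q) \<noteq> 0"
    have "smul3 ((\<lambda>(x, y, z). x ^ a * y ^ b * z ^ c) q) (G q) = smul3 ((\<lambda>(x, y, z). x ^ a * y ^ b * z ^ c) q) (G0 lam mu P Q R q)"
      using fG G0_eq[OF SC, of q] q(1) unfolding W_def by (metis IntD1 IntD2)
    moreover have "(\<lambda>(x, y, z). x ^ a * y ^ b * z ^ c) q \<noteq> 0" using q by (cases q) auto
    ultimately show "G q = G0 lam mu P Q R q" by (rule smul3_cancel[rotated])
  qed
  define al where "al = deriv (\<lambda>t. R (t, 0, 0)) 0"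
  define be where "be = deriv (\<lambda>t. R (0, t, 0)) 0"
  define ga where "ga = deriv (\<lambda>t. R (0, 0, t)) 0"
  have hp0: "hom_part 0 G v = 0" for v
    using GG0[OF oW(2)] sc by (simp add: hom_part0 G0_def zero_prod_def)
  have hp1: "hom_part (Suc 0) G v = Lin lam mu al be ga v" for v
  proof -
    obtain DP where DP: "hd3 P DP 0" using holo3D[OF sc(7) sc(2)] by blast
    obtain DQ where DQ: "hd3 Q DQ 0" using holo3D[OF sc(8) sc(2)] by blast
    obtain DR where DR: "hd3 R DR 0" using holo3D[OF sc(9) sc(2)] by blast
    have d1: "((\<lambda>t. fst (G0 lam mu P Q R (smul3 t v))) has_field_derivative lam * fst v) (at 0)"
    proof -
      have "hd3 (\<lambda>p. fst p * (lam + P p)) (\<lambda>h. fst 0 * (0 + DP h) + fst h * (lam + P 0)) 0"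
        using hd3_mult[OF hd3_c1 hd3_add[OF hd3_const DP], of lam] by simp
      from hd3_line0[OF this, of v] show ?thesis using sc by (simp add: G0_def mult.commute)
    qed
    have d2: "((\<lambda>t. fst (snd (G0 lam mu P Q R (smul3 t v)))) has_field_derivative mu * fst (snd v)) (at 0)"
    proof -
      have "hd3 (\<lambda>p. fst (snd p) * (mu + Q p)) (\<lambda>h. fst (snd 0) * (0 + DQ h) + fst (snd h) * (mu + Q 0)) 0"
        using hd3_mult[OF hd3_c2 hd3_add[OF hd3_const DQ], of mu] by simp
      from hd3_line0[OF this, of v] show ?thesis using sc by (simp add: G0_def mult.commute)
    qed
    have d3: "((\<lambda>t. snd (snd (G0 lam mu P Q R (smul3 t v)))) has_field_derivative al * fst v + be * fst (snd v) + ga * snd (snd v)) (at 0)"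
    proof -
      have e: "DR (1,0,0) = al" "DR (0,1,0) = be" "DR (0,0,1) = ga"
        using pd_eq[OF DR, of "(1,0,0)"] pd_eq[OF DR, of "(0,1,0)"] pd_eq[OF DR, of "(0,0,1)"]
        by (simp_all add: al_def be_def ga_def smul3_def)
      from hd3_line0[OF DR, of v] hd3_linear_decomp[OF DR, of v] e
      show ?thesis by (simp add: G0_def mult.commute)
    qed
    have "deriv (\<lambda>t. fst (G (smul3 t v))) 0 = lam * fst v" by (rule deriv_local[OF d1 oW]) (simp add: GG0)
    moreover have "deriv (\<lambda>t. fst (snd (G (smul3 t v)))) 0 = mu * fst (snd v)" by (rule deriv_local[OF d2 oW]) (simp add: GG0)
    moreover have "deriv (\<lambda>t. snd (snd (G (smul3 t v)))) 0 = al * fst v + be * fst (snd v) + ga * snd (snd v)"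
      by (rule deriv_local[OF d3 oW]) (simp add: GG0)
    ultimately show ?thesis unfolding hom_part1 Lin_def by simp
  qed
  have "(LEAST k. \<exists>v. hom_part k G v \<noteq> 0) = Suc 0"
  proof (rule Least_equality)
    show "\<exists>v. hom_part (Suc 0) G v \<noteq> 0"
    proof
      show "hom_part (Suc 0) G (1,0,0) \<noteq> 0" using hp1[of "(1,0,0)"] sc(5) by (simp add: Lin_def zero_prod_def)
    qed
    show "\<And>k. \<exists>v. hom_part k G v \<noteq> 0 \<Longrightarrow> Suc 0 \<le> k"
      using hp0 by (metis Suc_leI neq0_conv)
  qed
  then show ?thesis unfolding lowest_hom_def using hp1 al_def be_def ga_def by (auto simp: fun_eq_iff)
qed

lemma holo3map_comp:
  assumes "holo3map W h" "holo3map V \<phi>" "\<And>p. p \<in> V \<Longrightarrow> \<phi> p \<in> W"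
  shows "holo3map V (\<lambda>p. h (\<phi> p))"
proof -
  have hv: "holo3 V (\<lambda>p. fst (\<phi> p))" "holo3 V (\<lambda>p. fst (snd (\<phi> p)))" "holo3 V (\<lambda>p. snd (snd (\<phi> p)))"
    using assms(2) unfolding holo3map_def by auto
  have "(fst (\<phi> p), fst (snd (\<phi> p)), snd (snd (\<phi> p))) \<in> W" if "p \<in> V" for p using assms(3)[OF that] by simp
  note c = holo3_comp[OF hv _ this]
  show ?thesis using assms(1) unfolding holo3map_def
    using c[of "\<lambda>p. fst (h p)"] c[of "\<lambda>p. fst (snd (h p))"] c[of "\<lambda>p. snd (snd (h p))"] by simp
qed

lemma holo3map_cong: "holo3map U h \<Longrightarrow> (\<And>p. p \<in> U \<Longrightarrow> h p = h' p) \<Longrightarrow> holo3map U h'"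
  unfolding holo3map_def by (metis (no_types, lifting) holo3_cong)

lemma holo3map_open: "holo3map U h \<Longrightarrow> open U"
  unfolding holo3map_def using holo3_open by blast

lemma holo3map_subset: "holo3map U h \<Longrightarrow> open V \<Longrightarrow> V \<subseteq> U \<Longrightarrow> holo3map V h"
  unfolding holo3map_def using holo3_subset by blast

lemma sc0_cong: "is_simple_corner0 h U \<Longrightarrow> (\<And>p. p \<in> U \<Longrightarrow> h p = h' p) \<Longrightarrow> is_simple_corner0 h' U"
  unfolding is_simple_corner0_def simple_corner_form_def by metis

lemma perm_lemma:
  assumes sc: "simple_corner_at (\<lambda>p. \<sigma>' (g (\<sigma> p))) q"
   and inv1: "\<And>p. \<sigma>' (\<sigma> p) = p" and inv2: "\<And>p. \<sigma> (\<sigma>' p) = p"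
   and hs: "holo3map UNIV \<sigma>" "holo3map UNIV \<sigma>'"
  shows "simple_corner_at g (\<sigma> q)"
proof -
  obtain \<psi> V W U where oV: "open V" and oW: "open W" and V0: "0 \<in> V" and psi0: "\<psi> 0 = q"
    and bij: "bij_betw \<psi> V W" and hpsi: "holo3map V \<psi>" and hinv: "holo3map W (inv_into V \<psi>)"
    and UV: "U \<subseteq> V" and gW: "\<forall>p\<in>U. \<sigma>' (g (\<sigma> (\<psi> p))) \<in> W"
    and s0: "is_simple_corner0 (\<lambda>p. inv_into V \<psi> (\<sigma>' (g (\<sigma> (\<psi> p))))) U"
    using sc unfolding simple_corner_at_def by blast
  define W2 where "W2 = \<sigma>' -` W"
  have oW2: "open W2" unfolding W2_def
    by (rule open_vimage[OF oW]) (use holo3map_cont[OF hs(2)] in auto)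
  have sW: "\<sigma> ` W = W2" unfolding W2_def using inv1 inv2 by (auto, metis imageI)
  have bijs: "bij_betw \<sigma> W W2"
    unfolding bij_betw_def using sW inv1 by (metis inj_on_inverseI)
  have bij2: "bij_betw (\<lambda>p. \<sigma> (\<psi> p)) V W2"
    using bij_betw_trans[OF bij bijs] by (simp add: comp_def)
  have invc: "inv_into V (\<lambda>p. \<sigma> (\<psi> p)) y = inv_into V \<psi> (\<sigma>' y)" if "y \<in> W2" for y
  proof -
    have y': "\<sigma>' y \<in> W" using that by (simp add: W2_def)
    then have "\<sigma>' y \<in> \<psi> ` V" using bij by (simp add: bij_betw_def)
    then have x: "inv_into V \<psi> (\<sigma>' y) \<in> V" "\<psi> (inv_into V \<psi> (\<sigma>' y)) = \<sigma>' y"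
      by (auto intro: inv_into_into f_inv_into_f)
    show ?thesis
      by (rule inv_into_f_eq) (use bij2 x inv2 in \<open>auto simp: bij_betw_def\<close>)
  qed
  have h2: "holo3map V (\<lambda>p. \<sigma> (\<psi> p))" by (rule holo3map_comp[OF hs(1) hpsi]) auto
  have h3: "holo3map W2 (inv_into V (\<lambda>p. \<sigma> (\<psi> p)))"
  proof (rule holo3map_cong)
    show "holo3map W2 (\<lambda>y. inv_into V \<psi> (\<sigma>' y))"
      by (rule holo3map_comp[OF hinv holo3map_subset]) (use hs(2) oW2 in \<open>auto simp: W2_def\<close>)
  qed (simp add: invc)
  show ?thesis unfolding simple_corner_at_def
  proof (intro exI conjI)
    show "open V" "open W2" "0 \<in> V" "\<sigma> (\<psi> 0) = \<sigma> q" "bij_betw (\<lambda>p. \<sigma> (\<psi> p)) V W2" "U \<subseteq> V"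
      using oV oW2 V0 psi0 bij2 UV by auto
    show "holo3map V (\<lambda>p. \<sigma> (\<psi> p))" "holo3map W2 (inv_into V (\<lambda>p. \<sigma> (\<psi> p)))" using h2 h3 .
    show "\<forall>p\<in>U. g (\<sigma> (\<psi> p)) \<in> W2" using gW by (simp add: W2_def)
    show "is_simple_corner0 (\<lambda>p. inv_into V (\<lambda>p. \<sigma> (\<psi> p)) (g (\<sigma> (\<psi> p)))) U"
      by (rule sc0_cong[OF s0]) (use gW invc in \<open>auto simp: W2_def\<close>)
  qed
qed

lemma holo3map_T: "holo3map UNIV (\<lambda>p. (fst p + k1, fst (snd p) + k2, snd (snd p) + k3))"
  unfolding holo3map_def by (auto intro!: holo3_add holo3_c1 holo3_c2 holo3_c3)

lemma point_lemma:
  fixes g :: "c3 \<Rightarrow> c3" and B1 B2 A3 :: "c3 \<Rightarrow> complex"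
  assumes oN: "open N" and qN: "(0,0,w0) \<in> N"
   and g: "\<And>s u w. (s,u,w) \<in> N \<Longrightarrow> g (s,u,w) = (s + s^e1*u^e2*w^e3 * (s * B1 (s,u,w)),
            u + s^e1*u^e2*w^e3 * (u * B2 (s,u,w)), w + s^e1*u^e2*w^e3 * A3 (s,u,w))"
   and e: "e1 > 0" "e2 > 0"
   and hB: "holo3 N B1" "holo3 N B2" "holo3 N A3"
   and lam0: "(if w0 = 0 then 1 else w0^e3) * B1 (0,0,w0) \<noteq> 0"
   and mu0: "\<not>(\<exists>r::rat. r>0 \<and> (if w0 = 0 then 1 else w0^e3) * B2 (0,0,w0) =
              ((if w0 = 0 then 1 else w0^e3) * B1 (0,0,w0)) * of_rat r)"
   and A0: "A3 (0,0,w0) = 0"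
   and dv: "w0 = 0 \<Longrightarrow> e3 > 0 \<Longrightarrow> \<exists>B3. holo3 N B3 \<and> (\<forall>p\<in>N. A3 p = snd (snd p) * B3 p)"
  shows "simple_corner_at g (0,0,w0)"
proof -
  define T where "T p = (fst p + 0, fst (snd p) + 0, snd (snd p) + w0)" for p :: c3
  define T' where "T' p = (fst p + 0, fst (snd p) + 0, snd (snd p) + (- w0))" for p :: c3
  have TT: "T (T' p) = p" "T' (T p) = p" for p by (auto simp: T_def T'_def)
  have hT: "holo3map UNIV T" "holo3map UNIV T'" unfolding T_def T'_def by (rule holo3map_T)+
  have bT: "bij_betw T UNIV UNIV" by (metis TT bij_betw_def bij_def bij_betw_byWitness iso_tuple_UNIV_I subset_UNIV)
  have injT: "inj T" using bT bij_betw_def by blast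
  have invT: "inv_into UNIV T y = T' y" for y by (rule inv_into_f_eq[OF injT]) (auto simp: TT)
  define U where "U = T -` N"
  have oU: "open U" unfolding U_def by (rule open_vimage[OF oN]) (use holo3map_cont[OF hT(1)] in auto)
  have T0: "T 0 = (0,0,w0)" by (simp add: T_def zero_prod_def)
  have U0: "0 \<in> U" using qN T0 by (simp add: U_def)
  define W0 where "W0 = (if w0 = 0 then 1 else w0^e3)"
  define d3 where "d3 = (if w0 = 0 then e3 else 0)"
  define Wf where "Wf p = (if w0 = 0 then 1 else (snd (snd p) + w0)^e3)" for p :: c3
  define lam' where "lam' = W0 * B1 (0,0,w0)"
  define mu' where "mu' = W0 * B2 (0,0,w0)"
  define P' where "P' p = Wf p * B1 (T p) - lam'" for p
  define Q' where "Q' p = Wf p * B2 (T p) - mu'" for p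
  define R' where "R' p = Wf p * A3 (T p)" for p
  have hWf: "holo3 U Wf"
    unfolding Wf_def by (cases "w0 = 0") (auto intro!: holo3_power holo3_add holo3_c3 oU holo3_const)
  have compN: "holo3 N B \<Longrightarrow> holo3 U (\<lambda>p. B (T p))" for B
    unfolding T_def by (rule holo3_comp) (use oU in \<open>auto intro!: holo3_add holo3_c1 holo3_c2 holo3_c3 simp: U_def T_def\<close>)
  have W00: "Wf 0 = W0" by (simp add: Wf_def W0_def zero_prod_def)
  have form: "simple_corner_form (\<lambda>p. g (T p) - (0,0,w0)) e1 e2 d3 lam' mu' P' Q' R' U"
    unfolding simple_corner_form_def
  proof (intro conjI allI impI)
    show "open U" "0 \<in> U" "0 < e1" "0 < e2" using oU U0 e by auto
    show "lam' \<noteq> 0" "\<not> (\<exists>r. 0 < r \<and> mu' = lam' * of_rat r)" using lam0 mu0 by (auto simp: lam'_def mu'_def W0_def)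
    show "holo3 U P'" "holo3 U Q'" "holo3 U R'" unfolding P'_def Q'_def R'_def
      using holo3_diff[OF holo3_mult[OF hWf compN[OF hB(1)]] holo3_const[OF oU]]
        holo3_diff[OF holo3_mult[OF hWf compN[OF hB(2)]] holo3_const[OF oU]]
        holo3_mult[OF hWf compN[OF hB(3)]] by auto
    show "P' 0 = 0" "Q' 0 = 0" "R' 0 = 0" using A0 by (auto simp: P'_def Q'_def R'_def T0 W00 lam'_def mu'_def)
    show "\<exists>R''. holo3 U R'' \<and> (\<forall>p\<in>U. R' p = snd (snd p) * R'' p)" if "0 < d3"
    proof -
      have w: "w0 = 0" "e3 > 0" using that by (auto simp: d3_def split: if_splits)
      obtain B3 where B3: "holo3 N B3" "\<forall>p\<in>N. A3 p = snd (snd p) * B3 p" using dv[OF w] by blast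
      show ?thesis
      proof (intro exI conjI ballI)
        show "holo3 U (\<lambda>p. B3 (T p))" using compN[OF B3(1)] .
        fix p assume "p \<in> U"
        then have "T p \<in> N" by (simp add: U_def)
        then show "R' p = snd (snd p) * B3 (T p)" using B3(2) w by (simp add: R'_def Wf_def T_def)
      qed
    qed
    fix x y z assume xyz: "(x, y, z) \<in> U"
    then have N: "(x, y, z + w0) \<in> N" by (simp add: U_def T_def)
    have M: "z ^ d3 * Wf (x,y,z) = (z + w0) ^ e3" by (simp add: d3_def Wf_def)
    show "g (T (x, y, z)) - (0, 0, w0) =
          (x + x ^ e1 * y ^ e2 * z ^ d3 * x * (lam' + P' (x, y, z)), y + x ^ e1 * y ^ e2 * z ^ d3 * y * (mu' + Q' (x, y, z)),
           z + x ^ e1 * y ^ e2 * z ^ d3 * R' (x, y, z))"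
      unfolding P'_def Q'_def R'_def using g[OF N] M
      by (simp add: T_def algebra_simps)
  qed
  show ?thesis unfolding simple_corner_at_def
  proof (intro exI conjI)
    show "open (UNIV::c3 set)" "open (UNIV::c3 set)" "(0::c3) \<in> UNIV" "T 0 = (0,0,w0)" "bij_betw T UNIV UNIV" "U \<subseteq> UNIV"
      using T0 bT by auto
    show "holo3map UNIV T" using hT(1) .
    show "holo3map UNIV (inv_into UNIV T)" using hT(2) by (rule holo3map_cong) (simp add: invT)
    show "\<forall>p\<in>U. g (T p) \<in> UNIV" by simp
    show "is_simple_corner0 (\<lambda>p. inv_into UNIV T (g (T p))) U"
    proof (rule sc0_cong)
      show "is_simple_corner0 (\<lambda>p. g (T p) - (0,0,w0)) U" using form unfolding is_simple_corner0_def by blast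
      fix p show "g (T p) - (0,0,w0) = inv_into UNIV T (g (T p))"
        unfolding invT T'_def by (cases "g (T p)") simp
    qed
  qed
qed

lemma R_lin:
  assumes "hd3 R DR 0"
  shows "DR v = deriv (\<lambda>t. R (t,0,0)) 0 * fst v + deriv (\<lambda>t. R (0,t,0)) 0 * fst (snd v) + deriv (\<lambda>t. R (0,0,t)) 0 * snd (snd v)"
  using hd3_linear_decomp[OF assms, of v] pd_eq[OF assms, of "(1,0,0)"] pd_eq[OF assms, of "(0,1,0)"] pd_eq[OF assms, of "(0,0,1)"]
  by (simp add: smul3_def mult.commute)

lemma open_nz:
  assumes "holo3 V k" shows "open {p \<in> V. k p \<noteq> 0}"
proof -
  have "open (k -` (-{0}) \<inter> V)"
    using continuous_on_open_vimage[of V k] holo3_open[OF assms] holo3_continuous[OF assms] by blast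
  then show ?thesis by (simp add: Int_def conj_commute)
qed

lemma rho_value:
  assumes hR: "hd3 R DR 0" and hr: "holo3 V \<rho>" and p0: "p0 \<in> V"
   and eq: "\<And>t. p0 + smul3 t e \<in> V \<Longrightarrow> R (smul3 t v) = t * \<rho> (p0 + smul3 t e)"
  shows "\<rho> p0 = DR v"
proof -
  define S where "S = (\<lambda>t. p0 + smul3 t e) -` V"
  have oS: "open S" unfolding S_def
    by (rule open_vimage[OF holo3_open[OF hr]]) (auto simp: smul3_def intro!: continuous_intros)
  have S0: "0 \<in> S" using p0 by (simp add: S_def)
  obtain Dr where Dr: "hd3 \<rho> Dr (p0 + smul3 0 e)" using holo3D[OF hr p0] by auto
  have "((\<lambda>t. t * \<rho> (p0 + smul3 t e)) has_field_derivative 1 * \<rho> (p0 + smul3 0 e) + Dr e * 0) (at 0)"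
    by (intro DERIV_mult DERIV_ident hd3_line Dr)
  then have d1: "((\<lambda>t. t * \<rho> (p0 + smul3 t e)) has_field_derivative \<rho> p0) (at 0)" by simp
  have d2: "((\<lambda>t. R (smul3 t v)) has_field_derivative DR v) (at 0)" by (rule hd3_line0[OF hR])
  have "((\<lambda>t. t * \<rho> (p0 + smul3 t e)) has_field_derivative DR v) (at 0)"
    by (rule has_field_derivative_transform_within_open[OF d2 oS S0]) (simp add: S_def eq)
  then show ?thesis using d1 DERIV_unique by blast
qed

definition b3 :: "c3 \<Rightarrow> c3" where "b3 p = (fst p * snd (snd p), fst (snd p) * snd (snd p), snd (snd p))"
lemma blow3: "blow_chart 3 p = b3 p" by (cases p) (simp add: blow_chart_def b3_def)

definition E3 :: "nat \<Rightarrow> nat \<Rightarrow> nat \<Rightarrow> c3 \<Rightarrow> complex" where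
  "E3 a b c p = fst p ^ a * fst (snd p) ^ b * snd (snd p) ^ (a+b+c)"

definition lift3 where
  "lift3 a b c lam mu P Q (\<rho>::c3\<Rightarrow>complex) p =
    (fst p * (1 + E3 a b c p * (lam + P (b3 p))) / (1 + E3 a b c p * \<rho> p),
     fst (snd p) * (1 + E3 a b c p * (mu + Q (b3 p))) / (1 + E3 a b c p * \<rho> p),
     snd (snd p) * (1 + E3 a b c p * \<rho> p))"

lemma holo3_E3: "open N \<Longrightarrow> holo3 N (E3 a b c)"
  unfolding E3_def by (intro holo3_mult holo3_power holo3_c1 holo3_c2 holo3_c3)

lemma holo3_b3comp: "holo3 U P \<Longrightarrow> open N \<Longrightarrow> (\<And>p. p \<in> N \<Longrightarrow> b3 p \<in> U) \<Longrightarrow> holo3 N (\<lambda>p. P (b3 p))"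
  unfolding b3_def by (rule holo3_comp) (auto intro!: holo3_mult holo3_c1 holo3_c2 holo3_c3 simp: b3_def)

lemma lift3_props:
  assumes SC: "simple_corner_form f a b c lam mu P Q R U"
   and oN: "open N" and hr: "holo3 N \<rho>" and inU': "\<forall>p\<in>N. b3 p \<in> U"
   and Req': "\<forall>p\<in>N. R (b3 p) = snd (snd p) * \<rho> p"
   and nz': "\<forall>p\<in>N. 1 + E3 a b c p * \<rho> p \<noteq> 0"
  defines "B1 \<equiv> \<lambda>p. (lam + P (b3 p) - \<rho> p) / (1 + E3 a b c p * \<rho> p)"
      and "B2 \<equiv> \<lambda>p. (mu + Q (b3 p) - \<rho> p) / (1 + E3 a b c p * \<rho> p)"
  shows "holo3map N (lift3 a b c lam mu P Q \<rho>)"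
    and "\<And>p. p \<in> N \<Longrightarrow> blow_chart 3 (lift3 a b c lam mu P Q \<rho> p) = f (blow_chart 3 p)"
    and "\<And>s u w. (s,u,w) \<in> N \<Longrightarrow> lift3 a b c lam mu P Q \<rho> (s,u,w) =
          (s + s^a*u^b*w^(a+b+c) * (s * B1 (s,u,w)), u + s^a*u^b*w^(a+b+c) * (u * B2 (s,u,w)),
           w + s^a*u^b*w^(a+b+c) * (w * \<rho> (s,u,w)))"
    and "holo3 N B1" "holo3 N B2"
    and "\<And>s u. (s,u,0) \<in> N \<Longrightarrow> \<rho> (s,u,0) = deriv (\<lambda>t. R (t,0,0)) 0 * s + deriv (\<lambda>t. R (0,t,0)) 0 * u + deriv (\<lambda>t. R (0,0,t)) 0"
proof -
  have inU: "\<And>p. p \<in> N \<Longrightarrow> b3 p \<in> U" using inU' by blast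
  note Req = bspec[OF Req'] and nz = bspec[OF nz']
  note sc = sc_parts[OF SC]
  have hE: "holo3 N (E3 a b c)" by (rule holo3_E3[OF oN])
  have hP: "holo3 N (\<lambda>p. P (b3 p))" "holo3 N (\<lambda>p. Q (b3 p))"
    using holo3_b3comp[OF sc(7) oN inU] holo3_b3comp[OF sc(8) oN inU] by auto
  have hden: "holo3 N (\<lambda>p. 1 + E3 a b c p * \<rho> p)" by (intro holo3_add holo3_mult holo3_const oN hE hr)
  show "holo3 N B1" unfolding B1_def
    by (intro holo3_divide holo3_diff holo3_add holo3_const oN hP hr hden nz)
  show "holo3 N B2" unfolding B2_def
    by (intro holo3_divide holo3_diff holo3_add holo3_const oN hP hr hden nz)
  show "holo3map N (lift3 a b c lam mu P Q \<rho>)" unfolding holo3map_def lift3_def fst_conv snd_conv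
    by (intro conjI holo3_divide holo3_mult holo3_add holo3_const oN hP hr hden nz hE holo3_c1 holo3_c2 holo3_c3)
  show "lift3 a b c lam mu P Q \<rho> (s,u,w) =
          (s + s^a*u^b*w^(a+b+c) * (s * B1 (s,u,w)), u + s^a*u^b*w^(a+b+c) * (u * B2 (s,u,w)),
           w + s^a*u^b*w^(a+b+c) * (w * \<rho> (s,u,w)))" if "(s,u,w) \<in> N" for s u w
    using nz[OF that] unfolding lift3_def B1_def B2_def E3_def by (simp add: field_simps)
  show "blow_chart 3 (lift3 a b c lam mu P Q \<rho> p) = f (blow_chart 3 p)" if p: "p \<in> N" for p
  proof -
    obtain s u w where pp: "p = (s,u,w)" by (cases p)
    have fe: "f (s*w, u*w, w) = (s*w + (s*w)^a * (u*w)^b * w^c * (s*w) * (lam + P (s*w,u*w,w)),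
        u*w + (s*w)^a * (u*w)^b * w^c * (u*w) * (mu + Q (s*w,u*w,w)), w + (s*w)^a * (u*w)^b * w^c * R (s*w,u*w,w))"
      using sc(14) inU[OF p] by (simp add: pp b3_def)
    have l: "(s*w)^a * (u*w)^b * w^c = s^a*u^b*w^(a+b+c)" by (simp add: power_mult_distrib power_add)
    have R': "R (s*w,u*w,w) = w * \<rho> (s,u,w)" using Req[OF p] by (simp add: pp b3_def)
    define e where "e = s^a*u^b*w^(a+b+c)"
    have E: "E3 a b c (s,u,w) = e" by (simp add: E3_def e_def)
    have D: "1 + e * \<rho> (s,u,w) \<noteq> 0" using nz[OF p] by (simp add: pp E)
    have g: "lift3 a b c lam mu P Q \<rho> (s,u,w) = (s * (1 + e * (lam + P (s*w,u*w,w))) / (1 + e * \<rho> (s,u,w)),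
       u * (1 + e * (mu + Q (s*w,u*w,w))) / (1 + e * \<rho> (s,u,w)), w * (1 + e * \<rho> (s,u,w)))"
      by (simp add: lift3_def E b3_def)
    have c1: "s * (1 + e * (lam + P (s*w,u*w,w))) / (1 + e * \<rho> (s,u,w)) * (w * (1 + e * \<rho> (s,u,w)))
        = s*w + e * (s*w) * (lam + P (s*w,u*w,w))" using D by (simp add: field_simps)
    have c2: "u * (1 + e * (mu + Q (s*w,u*w,w))) / (1 + e * \<rho> (s,u,w)) * (w * (1 + e * \<rho> (s,u,w)))
        = u*w + e * (u*w) * (mu + Q (s*w,u*w,w))" using D by (simp add: field_simps)
    have c3: "w * (1 + e * \<rho> (s,u,w)) = w + e * R (s*w,u*w,w)" by (simp add: R' algebra_simps)
    show ?thesis unfolding blow3 pp g b3_def fst_conv snd_conv c1 c2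
      unfolding c3 b3_def[symmetric] using fe l unfolding b3_def by (simp add: e_def)
  qed
  show "\<rho> (s,u,0) = deriv (\<lambda>t. R (t,0,0)) 0 * s + deriv (\<lambda>t. R (0,t,0)) 0 * u + deriv (\<lambda>t. R (0,0,t)) 0"
    if su: "(s,u,0) \<in> N" for s u
  proof -
    obtain DR where DR: "hd3 R DR 0" using holo3D[OF sc(9) sc(2)] by blast
    have "\<rho> (s,u,0) = DR (s,u,1)"
    proof (rule rho_value[OF DR hr su])
      fix t assume "(s,u,0) + smul3 t (0,0,1) \<in> N"
      then have "(s,u,t) \<in> N" by (simp add: smul3_def)
      from Req[OF this] show "R (smul3 t (s,u,1)) = t * \<rho> ((s,u,0) + smul3 t (0,0,1))"
        by (simp add: smul3_def b3_def mult.commute)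
    qed
    then show ?thesis using R_lin[OF DR, of "(s,u,1)"] by simp
  qed
qed

lemma chart3_exists:
  assumes SC: "simple_corner_form f a b c lam mu P Q R U"
  shows "\<exists>N \<rho>. open N \<and> (s0,u0,0) \<in> N \<and> holo3 N \<rho> \<and> (\<forall>p\<in>N. b3 p \<in> U) \<and>
     (\<forall>p\<in>N. R (b3 p) = snd (snd p) * \<rho> p) \<and> (\<forall>p\<in>N. 1 + E3 a b c p * \<rho> p \<noteq> 0)"
proof -
  note sc = sc_parts[OF SC]
  define \<Omega> where "\<Omega> = b3 -` U"
  have oO: "open \<Omega>" unfolding \<Omega>_def
    by (rule open_vimage[OF sc(1)]) (auto simp: b3_def intro!: continuous_intros)
  have hH: "holo3 \<Omega> (\<lambda>p. R (b3 p))" by (rule holo3_b3comp[OF sc(9) oO]) (simp add: \<Omega>_def)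
  have p0: "(s0,u0,0) \<in> \<Omega>" using sc(2) by (simp add: \<Omega>_def b3_def zero_prod_def)
  have Z: "R (b3 (s,u,0)) = 0" for s u using sc(12) by (simp add: b3_def zero_prod_def)
  obtain V k where V: "open V" "(s0,u0,0) \<in> V" "V \<subseteq> \<Omega>" "holo3 V k" "\<forall>p\<in>V. R (b3 p) = snd (snd p) * k p"
    using div3[OF hH p0] Z by blast
  define N where "N = {p \<in> V. 1 + E3 a b c p * k p \<noteq> 0}"
  have oN: "open N" unfolding N_def
    by (rule open_nz) (intro holo3_add holo3_mult holo3_const V holo3_E3)
  have "E3 a b c (s0,u0,0) = 0" using sc(3) by (simp add: E3_def)
  then have pN: "(s0,u0,0) \<in> N" using V by (simp add: N_def)
  show ?thesis
    apply (rule exI[of _ N], rule exI[of _ k])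
    using oN pN V unfolding N_def \<Omega>_def by (auto intro: holo3_subset[OF V(4)] simp: oN[unfolded N_def])
qed

lemma div1:
  assumes H: "holo3 \<Omega> H" and z0: "(0,u0,w0) \<in> \<Omega>"
    and Z: "\<And>u w. (0,u,w) \<in> \<Omega> \<Longrightarrow> H (0,u,w) = 0"
  shows "\<exists>V k. open V \<and> (0,u0,w0) \<in> V \<and> V \<subseteq> \<Omega> \<and> holo3 V k \<and> (\<forall>p\<in>V. H p = fst p * k p)"
proof -
  define sw where "sw p = (snd (snd p), fst (snd p), fst p)" for p :: c3
  have sws: "sw (sw p) = p" for p by (simp add: sw_def)
  define \<Omega>' where "\<Omega>' = sw -` \<Omega>"
  have oO': "open \<Omega>'" unfolding \<Omega>'_def
    by (rule open_vimage[OF holo3_open[OF H]]) (auto simp: sw_def intro!: continuous_intros)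
  have H': "holo3 \<Omega>' (\<lambda>p. H (snd (snd p), fst (snd p), fst p))"
    by (rule holo3_comp[OF _ _ _ H]) (use oO' in \<open>auto simp: \<Omega>'_def sw_def intro!: holo3_c1 holo3_c2 holo3_c3\<close>)
  obtain V' k' where V': "open V'" "(w0,u0,0) \<in> V'" "V' \<subseteq> \<Omega>'" "holo3 V' k'"
    "\<forall>p\<in>V'. H (snd (snd p), fst (snd p), fst p) = snd (snd p) * k' p"
    using div3[OF H', of w0 u0] z0 Z by (auto simp: \<Omega>'_def sw_def)
  define V where "V = sw -` V'"
  have oV: "open V" unfolding V_def
    by (rule open_vimage[OF V'(1)]) (auto simp: sw_def intro!: continuous_intros)
  have hk: "holo3 V (\<lambda>p. k' (sw p))" unfolding sw_def
    by (rule holo3_comp[OF _ _ _ V'(4)]) (use oV in \<open>auto simp: V_def sw_def intro!: holo3_c1 holo3_c2 holo3_c3\<close>)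
  show ?thesis
  proof (intro exI conjI)
    show "open V" "(0,u0,w0) \<in> V" "holo3 V (\<lambda>p. k' (sw p))" using oV V' hk by (auto simp: V_def sw_def)
    show "V \<subseteq> \<Omega>" using V'(3) unfolding V_def \<Omega>'_def by (metis subsetI sws vimageD vimageI2 subsetD)
    show "\<forall>p\<in>V. H p = fst p * k' (sw p)" using V'(5) by (auto simp: V_def sw_def)
  qed
qed

lemma div2:
  assumes H: "holo3 \<Omega> H" and z0: "(s0,0,w0) \<in> \<Omega>"
    and Z: "\<And>s w. (s,0,w) \<in> \<Omega> \<Longrightarrow> H (s,0,w) = 0"
  shows "\<exists>V k. open V \<and> (s0,0,w0) \<in> V \<and> V \<subseteq> \<Omega> \<and> holo3 V k \<and> (\<forall>p\<in>V. H p = fst (snd p) * k p)"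
proof -
  define sw where "sw p = (fst p, snd (snd p), fst (snd p))" for p :: c3
  have sws: "sw (sw p) = p" for p by (simp add: sw_def)
  define \<Omega>' where "\<Omega>' = sw -` \<Omega>"
  have oO': "open \<Omega>'" unfolding \<Omega>'_def
    by (rule open_vimage[OF holo3_open[OF H]]) (auto simp: sw_def intro!: continuous_intros)
  have H': "holo3 \<Omega>' (\<lambda>p. H (fst p, snd (snd p), fst (snd p)))"
    by (rule holo3_comp[OF _ _ _ H]) (use oO' in \<open>auto simp: \<Omega>'_def sw_def intro!: holo3_c1 holo3_c2 holo3_c3\<close>)
  obtain V' k' where V': "open V'" "(s0,w0,0) \<in> V'" "V' \<subseteq> \<Omega>'" "holo3 V' k'"
    "\<forall>p\<in>V'. H (fst p, snd (snd p), fst (snd p)) = snd (snd p) * k' p"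
    using div3[OF H', of s0 w0] z0 Z by (auto simp: \<Omega>'_def sw_def)
  define V where "V = sw -` V'"
  have oV: "open V" unfolding V_def
    by (rule open_vimage[OF V'(1)]) (auto simp: sw_def intro!: continuous_intros)
  have hk: "holo3 V (\<lambda>p. k' (sw p))" unfolding sw_def
    by (rule holo3_comp[OF _ _ _ V'(4)]) (use oV in \<open>auto simp: V_def sw_def intro!: holo3_c1 holo3_c2 holo3_c3\<close>)
  show ?thesis
  proof (intro exI conjI)
    show "open V" "(s0,0,w0) \<in> V" "holo3 V (\<lambda>p. k' (sw p))" using oV V' hk by (auto simp: V_def sw_def)
    show "V \<subseteq> \<Omega>" using V'(3) unfolding V_def \<Omega>'_def by (metis subsetI sws vimageD vimageI2 subsetD)
    show "\<forall>p\<in>V. H p = fst (snd p) * k' (sw p)" using V'(5) by (auto simp: V_def sw_def)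
  qed
qed

definition b1 :: "c3 \<Rightarrow> c3" where "b1 p = (fst p, fst p * fst (snd p), fst p * snd (snd p))"
lemma blow1: "blow_chart 1 p = b1 p" by (cases p) (simp add: blow_chart_def b1_def)

definition E1 :: "nat \<Rightarrow> nat \<Rightarrow> nat \<Rightarrow> c3 \<Rightarrow> complex" where
  "E1 a b c p = fst p ^ (a+b+c) * fst (snd p) ^ b * snd (snd p) ^ c"

definition lift1 where
  "lift1 a b c lam mu P Q (\<rho>::c3\<Rightarrow>complex) p =
    (fst p * (1 + E1 a b c p * (lam + P (b1 p))),
     fst (snd p) * (1 + E1 a b c p * (mu + Q (b1 p))) / (1 + E1 a b c p * (lam + P (b1 p))),
     (snd (snd p) + E1 a b c p * \<rho> p) / (1 + E1 a b c p * (lam + P (b1 p))))"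

lemma holo3_E1: "open N \<Longrightarrow> holo3 N (E1 a b c)"
  unfolding E1_def by (intro holo3_mult holo3_power holo3_c1 holo3_c2 holo3_c3)

lemma holo3_b1comp: "holo3 U P \<Longrightarrow> open N \<Longrightarrow> (\<And>p. p \<in> N \<Longrightarrow> b1 p \<in> U) \<Longrightarrow> holo3 N (\<lambda>p. P (b1 p))"
  unfolding b1_def by (rule holo3_comp) (auto intro!: holo3_mult holo3_c1 holo3_c2 holo3_c3 simp: b1_def)

lemma lift1_props:
  assumes SC: "simple_corner_form f a b c lam mu P Q R U"
   and oN: "open N" and hr: "holo3 N \<rho>" and inU': "\<forall>p\<in>N. b1 p \<in> U"
   and Req': "\<forall>p\<in>N. R (b1 p) = fst p * \<rho> p"
   and nz': "\<forall>p\<in>N. 1 + E1 a b c p * (lam + P (b1 p)) \<noteq> 0"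
  defines "B1 \<equiv> \<lambda>p. lam + P (b1 p)"
      and "B2 \<equiv> \<lambda>p. (mu + Q (b1 p) - lam - P (b1 p)) / (1 + E1 a b c p * (lam + P (b1 p)))"
      and "A3 \<equiv> \<lambda>p. (\<rho> p - snd (snd p) * (lam + P (b1 p))) / (1 + E1 a b c p * (lam + P (b1 p)))"
  shows "holo3map N (lift1 a b c lam mu P Q \<rho>)"
    and "\<And>p. p \<in> N \<Longrightarrow> blow_chart 1 (lift1 a b c lam mu P Q \<rho> p) = f (blow_chart 1 p)"
    and "\<And>s u w. (s,u,w) \<in> N \<Longrightarrow> lift1 a b c lam mu P Q \<rho> (s,u,w) =
          (s + s^(a+b+c)*u^b*w^c * (s * B1 (s,u,w)), u + s^(a+b+c)*u^b*w^c * (u * B2 (s,u,w)),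
           w + s^(a+b+c)*u^b*w^c * A3 (s,u,w))"
    and "holo3 N B1" "holo3 N B2" "holo3 N A3"
    and "\<And>u w. (0,u,w) \<in> N \<Longrightarrow> \<rho> (0,u,w) = deriv (\<lambda>t. R (t,0,0)) 0 + deriv (\<lambda>t. R (0,t,0)) 0 * u + deriv (\<lambda>t. R (0,0,t)) 0 * w"
proof -
  have inU: "\<And>p. p \<in> N \<Longrightarrow> b1 p \<in> U" using inU' by blast
  note Req = bspec[OF Req'] and nz = bspec[OF nz']
  note sc = sc_parts[OF SC]
  have hE: "holo3 N (E1 a b c)" by (rule holo3_E1[OF oN])
  have hP: "holo3 N (\<lambda>p. P (b1 p))" "holo3 N (\<lambda>p. Q (b1 p))"
    using holo3_b1comp[OF sc(7) oN inU] holo3_b1comp[OF sc(8) oN inU] by auto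
  have hden: "holo3 N (\<lambda>p. 1 + E1 a b c p * (lam + P (b1 p)))" by (intro holo3_add holo3_mult holo3_const oN hE hP)
  show "holo3 N B1" unfolding B1_def by (intro holo3_add holo3_const oN hP)
  show "holo3 N B2" unfolding B2_def
    by (intro holo3_divide holo3_diff holo3_add holo3_const oN hP hden nz)
  show "holo3 N A3" unfolding A3_def
    by (intro holo3_divide holo3_diff holo3_mult holo3_add holo3_const oN hP hr hden nz holo3_c3)
  show "holo3map N (lift1 a b c lam mu P Q \<rho>)" unfolding holo3map_def lift1_def fst_conv snd_conv
    by (intro conjI holo3_divide holo3_mult holo3_add holo3_const oN hP hr hden nz hE holo3_c1 holo3_c2 holo3_c3)
  show "lift1 a b c lam mu P Q \<rho> (s,u,w) =
          (s + s^(a+b+c)*u^b*w^c * (s * B1 (s,u,w)), u + s^(a+b+c)*u^b*w^c * (u * B2 (s,u,w)),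
           w + s^(a+b+c)*u^b*w^c * A3 (s,u,w))" if "(s,u,w) \<in> N" for s u w
    using nz[OF that] unfolding lift1_def B1_def B2_def A3_def E1_def by (simp add: field_simps)
  show "blow_chart 1 (lift1 a b c lam mu P Q \<rho> p) = f (blow_chart 1 p)" if p: "p \<in> N" for p
  proof -
    obtain s u w where pp: "p = (s,u,w)" by (cases p)
    have fe: "f (s, s*u, s*w) = (s + s^a * (s*u)^b * (s*w)^c * s * (lam + P (s,s*u,s*w)),
        s*u + s^a * (s*u)^b * (s*w)^c * (s*u) * (mu + Q (s,s*u,s*w)), s*w + s^a * (s*u)^b * (s*w)^c * R (s,s*u,s*w))"
      using sc(14) inU[OF p] by (simp add: pp b1_def)
    have l: "s^a * (s*u)^b * (s*w)^c = s^(a+b+c)*u^b*w^c" by (simp add: power_mult_distrib power_add)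
    have R': "R (s,s*u,s*w) = s * \<rho> (s,u,w)" using Req[OF p] by (simp add: pp b1_def)
    define e where "e = s^(a+b+c)*u^b*w^c"
    have E: "E1 a b c (s,u,w) = e" by (simp add: E1_def e_def)
    have D: "1 + e * (lam + P (s,s*u,s*w)) \<noteq> 0" using nz[OF p] by (simp add: pp E b1_def)
    have g: "lift1 a b c lam mu P Q \<rho> (s,u,w) = (s * (1 + e * (lam + P (s,s*u,s*w))),
       u * (1 + e * (mu + Q (s,s*u,s*w))) / (1 + e * (lam + P (s,s*u,s*w))), (w + e * \<rho> (s,u,w)) / (1 + e * (lam + P (s,s*u,s*w))))"
      by (simp add: lift1_def E b1_def)
    have c1: "s * (1 + e * (lam + P (s,s*u,s*w))) = s + e * s * (lam + P (s,s*u,s*w))" by (simp add: algebra_simps)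
    have c2: "s * (1 + e * (lam + P (s,s*u,s*w))) * (u * (1 + e * (mu + Q (s,s*u,s*w))) / (1 + e * (lam + P (s,s*u,s*w))))
        = s*u + e * (s*u) * (mu + Q (s,s*u,s*w))" using D by (simp add: field_simps)
    have c3: "s * (1 + e * (lam + P (s,s*u,s*w))) * ((w + e * \<rho> (s,u,w)) / (1 + e * (lam + P (s,s*u,s*w))))
        = s*w + e * R (s,s*u,s*w)" using D by (simp add: R' field_simps)
    show ?thesis unfolding blow1 pp g b1_def fst_conv snd_conv c2 c3
      unfolding c1 b1_def[symmetric] using fe l unfolding b1_def by (simp add: e_def)
  qed
  show "\<rho> (0,u,w) = deriv (\<lambda>t. R (t,0,0)) 0 + deriv (\<lambda>t. R (0,t,0)) 0 * u + deriv (\<lambda>t. R (0,0,t)) 0 * w"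
    if su: "(0,u,w) \<in> N" for u w
  proof -
    obtain DR where DR: "hd3 R DR 0" using holo3D[OF sc(9) sc(2)] by blast
    have "\<rho> (0,u,w) = DR (1,u,w)"
    proof (rule rho_value[OF DR hr su])
      fix t assume "(0,u,w) + smul3 t (1,0,0) \<in> N"
      then have "(t,u,w) \<in> N" by (simp add: smul3_def)
      from Req[OF this] show "R (smul3 t (1,u,w)) = t * \<rho> ((0,u,w) + smul3 t (1,0,0))"
        by (simp add: smul3_def b1_def mult.commute)
    qed
    then show ?thesis using R_lin[OF DR, of "(1,u,w)"] by simp
  qed
qed

lemma chart1_exists:
  assumes SC: "simple_corner_form f a b c lam mu P Q R U"
  shows "\<exists>N \<rho>. open N \<and> (0,u0,w0) \<in> N \<and> holo3 N \<rho> \<and> (\<forall>p\<in>N. b1 p \<in> U) \<and>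
     (\<forall>p\<in>N. R (b1 p) = fst p * \<rho> p) \<and> (\<forall>p\<in>N. 1 + E1 a b c p * (lam + P (b1 p)) \<noteq> 0) \<and>
     (c > 0 \<longrightarrow> (\<exists>R'. holo3 U R' \<and> (\<forall>p\<in>N. \<rho> p = snd (snd p) * R' (b1 p))))"
proof -
  note sc = sc_parts[OF SC]
  define \<Omega> where "\<Omega> = b1 -` U"
  have oO: "open \<Omega>" unfolding \<Omega>_def
    by (rule open_vimage[OF sc(1)]) (auto simp: b1_def intro!: continuous_intros)
  have hH: "holo3 \<Omega> (\<lambda>p. R (b1 p))" by (rule holo3_b1comp[OF sc(9) oO]) (simp add: \<Omega>_def)
  have p0: "(0,u0,w0) \<in> \<Omega>" using sc(2) by (simp add: \<Omega>_def b1_def zero_prod_def)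
  have Z: "R (b1 (0,u,w)) = 0" for u w using sc(12) by (simp add: b1_def zero_prod_def)
  obtain V k where V: "open V" "(0,u0,w0) \<in> V" "V \<subseteq> \<Omega>" "holo3 V k" "\<forall>p\<in>V. R (b1 p) = fst p * k p"
    and Vc: "c > 0 \<longrightarrow> (\<exists>R'. holo3 U R' \<and> (\<forall>p\<in>V. k p = snd (snd p) * R' (b1 p)))"
  proof (cases "c > 0")
    case True
    obtain R' where R': "holo3 U R'" "\<forall>p\<in>U. R p = snd (snd p) * R' p" using sc(13)[OF True] by blast
    show ?thesis
    proof (rule that[of \<Omega> "\<lambda>p. snd (snd p) * R' (b1 p)"])
      show "holo3 \<Omega> (\<lambda>p. snd (snd p) * R' (b1 p))"
        by (intro holo3_mult holo3_c3 oO holo3_b1comp[OF R'(1)]) (simp add: \<Omega>_def)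
      show "\<forall>p\<in>\<Omega>. R (b1 p) = fst p * (snd (snd p) * R' (b1 p))"
        using R'(2) by (auto simp: \<Omega>_def b1_def)
    qed (use oO p0 R'(1) in auto)
  next
    case False
    then show ?thesis using div1[OF hH p0] Z that by blast
  qed
  define N where "N = {p \<in> V. 1 + E1 a b c p * (lam + P (b1 p)) \<noteq> 0}"
  have hPV: "holo3 V (\<lambda>p. P (b1 p))" by (rule holo3_b1comp[OF sc(7) V(1)]) (use V(3) in \<open>auto simp: \<Omega>_def\<close>)
  have oN: "open N" unfolding N_def
    by (rule open_nz) (intro holo3_add holo3_mult holo3_const V holo3_E1 hPV)
  have "E1 a b c (0,u0,w0) = 0" using sc(3) by (simp add: E1_def)
  then have pN: "(0,u0,w0) \<in> N" using V by (simp add: N_def)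
  have hkN: "holo3 N k" by (rule holo3_subset[OF V(4) oN]) (auto simp: N_def)
  show ?thesis
  proof (rule exI[of _ N], rule exI[of _ k], intro conjI)
    show "c > 0 \<longrightarrow> (\<exists>R'. holo3 U R' \<and> (\<forall>p\<in>N. k p = snd (snd p) * R' (b1 p)))"
      using Vc by (auto simp: N_def)
  qed (use oN pN hkN V in \<open>auto simp: N_def \<Omega>_def\<close>)
qed

definition b2 :: "c3 \<Rightarrow> c3" where "b2 p = (fst p * fst (snd p), fst (snd p), fst (snd p) * snd (snd p))"
lemma blow2: "blow_chart 2 p = b2 p" by (cases p) (simp add: blow_chart_def b2_def)

definition E2 :: "nat \<Rightarrow> nat \<Rightarrow> nat \<Rightarrow> c3 \<Rightarrow> complex" where
  "E2 a b c p = fst p ^ a * fst (snd p) ^ (a+b+c) * snd (snd p) ^ c"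

definition lift2 where
  "lift2 a b c lam mu P Q (\<rho>::c3\<Rightarrow>complex) p =
    (fst p * (1 + E2 a b c p * (lam + P (b2 p))) / (1 + E2 a b c p * (mu + Q (b2 p))),
     fst (snd p) * (1 + E2 a b c p * (mu + Q (b2 p))),
     (snd (snd p) + E2 a b c p * \<rho> p) / (1 + E2 a b c p * (mu + Q (b2 p))))"

lemma holo3_E2: "open N \<Longrightarrow> holo3 N (E2 a b c)"
  unfolding E2_def by (intro holo3_mult holo3_power holo3_c1 holo3_c2 holo3_c3)

lemma holo3_b2comp: "holo3 U P \<Longrightarrow> open N \<Longrightarrow> (\<And>p. p \<in> N \<Longrightarrow> b2 p \<in> U) \<Longrightarrow> holo3 N (\<lambda>p. P (b2 p))"
  unfolding b2_def by (rule holo3_comp) (auto intro!: holo3_mult holo3_c1 holo3_c2 holo3_c3 simp: b2_def)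

lemma lift2_props:
  assumes SC: "simple_corner_form f a b c lam mu P Q R U"
   and oN: "open N" and hr: "holo3 N \<rho>" and inU': "\<forall>p\<in>N. b2 p \<in> U"
   and Req': "\<forall>p\<in>N. R (b2 p) = fst (snd p) * \<rho> p"
   and nz': "\<forall>p\<in>N. 1 + E2 a b c p * (mu + Q (b2 p)) \<noteq> 0"
  defines "B1 \<equiv> \<lambda>p. (lam + P (b2 p) - mu - Q (b2 p)) / (1 + E2 a b c p * (mu + Q (b2 p)))"
      and "B2 \<equiv> \<lambda>p. mu + Q (b2 p)"
      and "A3 \<equiv> \<lambda>p. (\<rho> p - snd (snd p) * (mu + Q (b2 p))) / (1 + E2 a b c p * (mu + Q (b2 p)))"
  shows "holo3map N (lift2 a b c lam mu P Q \<rho>)"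
    and "\<And>p. p \<in> N \<Longrightarrow> blow_chart 2 (lift2 a b c lam mu P Q \<rho> p) = f (blow_chart 2 p)"
    and "\<And>s u w. (s,u,w) \<in> N \<Longrightarrow> lift2 a b c lam mu P Q \<rho> (s,u,w) =
          (s + s^a*u^(a+b+c)*w^c * (s * B1 (s,u,w)), u + s^a*u^(a+b+c)*w^c * (u * B2 (s,u,w)),
           w + s^a*u^(a+b+c)*w^c * A3 (s,u,w))"
    and "holo3 N B1" "holo3 N B2" "holo3 N A3"
    and "\<And>s w. (s,0,w) \<in> N \<Longrightarrow> \<rho> (s,0,w) = deriv (\<lambda>t. R (t,0,0)) 0 * s + deriv (\<lambda>t. R (0,t,0)) 0 + deriv (\<lambda>t. R (0,0,t)) 0 * w"
proof -
  have inU: "\<And>p. p \<in> N \<Longrightarrow> b2 p \<in> U" using inU' by blast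
  note Req = bspec[OF Req'] and nz = bspec[OF nz']
  note sc = sc_parts[OF SC]
  have hE: "holo3 N (E2 a b c)" by (rule holo3_E2[OF oN])
  have hP: "holo3 N (\<lambda>p. P (b2 p))" "holo3 N (\<lambda>p. Q (b2 p))"
    using holo3_b2comp[OF sc(7) oN inU] holo3_b2comp[OF sc(8) oN inU] by auto
  have hden: "holo3 N (\<lambda>p. 1 + E2 a b c p * (mu + Q (b2 p)))" by (intro holo3_add holo3_mult holo3_const oN hE hP)
  show "holo3 N B2" unfolding B2_def by (intro holo3_add holo3_const oN hP)
  show "holo3 N B1" unfolding B1_def
    by (intro holo3_divide holo3_diff holo3_add holo3_const oN hP hden nz)
  show "holo3 N A3" unfolding A3_def
    by (intro holo3_divide holo3_diff holo3_mult holo3_add holo3_const oN hP hr hden nz holo3_c3)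
  show "holo3map N (lift2 a b c lam mu P Q \<rho>)" unfolding holo3map_def lift2_def fst_conv snd_conv
    by (intro conjI holo3_divide holo3_mult holo3_add holo3_const oN hP hr hden nz hE holo3_c1 holo3_c2 holo3_c3)
  show "lift2 a b c lam mu P Q \<rho> (s,u,w) =
          (s + s^a*u^(a+b+c)*w^c * (s * B1 (s,u,w)), u + s^a*u^(a+b+c)*w^c * (u * B2 (s,u,w)),
           w + s^a*u^(a+b+c)*w^c * A3 (s,u,w))" if "(s,u,w) \<in> N" for s u w
    using nz[OF that] unfolding lift2_def B1_def B2_def A3_def E2_def by (simp add: field_simps)
  show "blow_chart 2 (lift2 a b c lam mu P Q \<rho> p) = f (blow_chart 2 p)" if p: "p \<in> N" for p
  proof -
    obtain s u w where pp: "p = (s,u,w)" by (cases p)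
    have fe: "f (s*u, u, u*w) = (s*u + (s*u)^a * u^b * (u*w)^c * (s*u) * (lam + P (s*u,u,u*w)),
        u + (s*u)^a * u^b * (u*w)^c * u * (mu + Q (s*u,u,u*w)), u*w + (s*u)^a * u^b * (u*w)^c * R (s*u,u,u*w))"
      using sc(14) inU[OF p] by (simp add: pp b2_def)
    have l: "(s*u)^a * u^b * (u*w)^c = s^a*u^(a+b+c)*w^c" by (simp add: power_mult_distrib power_add)
    have R': "R (s*u,u,u*w) = u * \<rho> (s,u,w)" using Req[OF p] by (simp add: pp b2_def)
    define e where "e = s^a*u^(a+b+c)*w^c"
    have E: "E2 a b c (s,u,w) = e" by (simp add: E2_def e_def)
    have D: "1 + e * (mu + Q (s*u,u,u*w)) \<noteq> 0" using nz[OF p] by (simp add: pp E b2_def)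
    have g: "lift2 a b c lam mu P Q \<rho> (s,u,w) = (s * (1 + e * (lam + P (s*u,u,u*w))) / (1 + e * (mu + Q (s*u,u,u*w))),
       u * (1 + e * (mu + Q (s*u,u,u*w))), (w + e * \<rho> (s,u,w)) / (1 + e * (mu + Q (s*u,u,u*w))))"
      by (simp add: lift2_def E b2_def)
    have c2: "u * (1 + e * (mu + Q (s*u,u,u*w))) = u + e * u * (mu + Q (s*u,u,u*w))" by (simp add: algebra_simps)
    have c1: "s * (1 + e * (lam + P (s*u,u,u*w))) / (1 + e * (mu + Q (s*u,u,u*w))) * (u * (1 + e * (mu + Q (s*u,u,u*w))))
        = s*u + e * (s*u) * (lam + P (s*u,u,u*w))" using D by (simp add: field_simps)
    have c3: "u * (1 + e * (mu + Q (s*u,u,u*w))) * ((w + e * \<rho> (s,u,w)) / (1 + e * (mu + Q (s*u,u,u*w))))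
        = u*w + e * R (s*u,u,u*w)" using D by (simp add: R' field_simps)
    show ?thesis unfolding blow2 pp g b2_def fst_conv snd_conv c1 c3
      unfolding c2 b2_def[symmetric] using fe l unfolding b2_def by (simp add: e_def)
  qed
  show "\<rho> (s,0,w) = deriv (\<lambda>t. R (t,0,0)) 0 * s + deriv (\<lambda>t. R (0,t,0)) 0 + deriv (\<lambda>t. R (0,0,t)) 0 * w"
    if su: "(s,0,w) \<in> N" for s w
  proof -
    obtain DR where DR: "hd3 R DR 0" using holo3D[OF sc(9) sc(2)] by blast
    have "\<rho> (s,0,w) = DR (s,1,w)"
    proof (rule rho_value[OF DR hr su])
      fix t assume "(s,0,w) + smul3 t (0,1,0) \<in> N"
      then have "(s,t,w) \<in> N" by (simp add: smul3_def)
      from Req[OF this] show "R (smul3 t (s,1,w)) = t * \<rho> ((s,0,w) + smul3 t (0,1,0))"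
        by (simp add: smul3_def b2_def mult.commute)
    qed
    then show ?thesis using R_lin[OF DR, of "(s,1,w)"] by simp
  qed
qed

lemma chart2_exists:
  assumes SC: "simple_corner_form f a b c lam mu P Q R U"
  shows "\<exists>N \<rho>. open N \<and> (s0,0,w0) \<in> N \<and> holo3 N \<rho> \<and> (\<forall>p\<in>N. b2 p \<in> U) \<and>
     (\<forall>p\<in>N. R (b2 p) = fst (snd p) * \<rho> p) \<and> (\<forall>p\<in>N. 1 + E2 a b c p * (mu + Q (b2 p)) \<noteq> 0) \<and>
     (c > 0 \<longrightarrow> (\<exists>R'. holo3 U R' \<and> (\<forall>p\<in>N. \<rho> p = snd (snd p) * R' (b2 p))))"
proof -
  note sc = sc_parts[OF SC]
  define \<Omega> where "\<Omega> = b2 -` U"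
  have oO: "open \<Omega>" unfolding \<Omega>_def
    by (rule open_vimage[OF sc(1)]) (auto simp: b2_def intro!: continuous_intros)
  have hH: "holo3 \<Omega> (\<lambda>p. R (b2 p))" by (rule holo3_b2comp[OF sc(9) oO]) (simp add: \<Omega>_def)
  have p0: "(s0,0,w0) \<in> \<Omega>" using sc(2) by (simp add: \<Omega>_def b2_def zero_prod_def)
  have Z: "R (b2 (s,0,w)) = 0" for s w using sc(12) by (simp add: b2_def zero_prod_def)
  obtain V k where V: "open V" "(s0,0,w0) \<in> V" "V \<subseteq> \<Omega>" "holo3 V k" "\<forall>p\<in>V. R (b2 p) = fst (snd p) * k p"
    and Vc: "c > 0 \<longrightarrow> (\<exists>R'. holo3 U R' \<and> (\<forall>p\<in>V. k p = snd (snd p) * R' (b2 p)))"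
  proof (cases "c > 0")
    case True
    obtain R' where R': "holo3 U R'" "\<forall>p\<in>U. R p = snd (snd p) * R' p" using sc(13)[OF True] by blast
    show ?thesis
    proof (rule that[of \<Omega> "\<lambda>p. snd (snd p) * R' (b2 p)"])
      show "holo3 \<Omega> (\<lambda>p. snd (snd p) * R' (b2 p))"
        by (intro holo3_mult holo3_c3 oO holo3_b2comp[OF R'(1)]) (simp add: \<Omega>_def)
      show "\<forall>p\<in>\<Omega>. R (b2 p) = fst (snd p) * (snd (snd p) * R' (b2 p))"
        using R'(2) by (auto simp: \<Omega>_def b2_def)
    qed (use oO p0 R'(1) in auto)
  next
    case False
    then show ?thesis using div2[OF hH p0] Z that by blast
  qed
  define N where "N = {p \<in> V. 1 + E2 a b c p * (mu + Q (b2 p)) \<noteq> 0}"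
  have hQV: "holo3 V (\<lambda>p. Q (b2 p))" by (rule holo3_b2comp[OF sc(8) V(1)]) (use V(3) in \<open>auto simp: \<Omega>_def\<close>)
  have oN: "open N" unfolding N_def
    by (rule open_nz) (intro holo3_add holo3_mult holo3_const V holo3_E2 hQV)
  have "E2 a b c (s0,0,w0) = 0" using sc(3) by (simp add: E2_def)
  then have pN: "(s0,0,w0) \<in> N" using V by (simp add: N_def)
  have hkN: "holo3 N k" by (rule holo3_subset[OF V(4) oN]) (auto simp: N_def)
  show ?thesis
  proof (rule exI[of _ N], rule exI[of _ k], intro conjI)
    show "c > 0 \<longrightarrow> (\<exists>R'. holo3 U R' \<and> (\<forall>p\<in>N. k p = snd (snd p) * R' (b2 p)))"
      using Vc by (auto simp: N_def)
  qed (use oN pN hkN V in \<open>auto simp: N_def \<Omega>_def\<close>)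
qed

lemma holo3map_perm:
  "holo3map UNIV (\<lambda>p. (snd (snd p), fst (snd p), fst p))"
  "holo3map UNIV (\<lambda>p. (fst p, snd (snd p), fst (snd p)))"
  "holo3map UNIV (\<lambda>p. (fst (snd p), snd (snd p), fst p))"
  "holo3map UNIV (\<lambda>p. (snd (snd p), fst p, fst (snd p)))"
  unfolding holo3map_def by (auto intro!: holo3_c1 holo3_c2 holo3_c3)

lemma perm1_sc:
  fixes g :: "c3 \<Rightarrow> c3"
  assumes oN: "open N" and qN: "(s0,0,0) \<in> N"
   and g: "\<And>s u w. (s,u,w) \<in> N \<Longrightarrow> g (s,u,w) = (s + s^a*u^b*w^k * (s * B1 (s,u,w)),
            u + s^a*u^b*w^k * (u * B2 (s,u,w)), w + s^a*u^b*w^k * (w * B3 (s,u,w)))"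
   and e: "a > 0" "b > 0" "k > 0"
   and hB: "holo3 N B1" "holo3 N B2" "holo3 N B3"
   and lam0: "(if s0 = 0 then 1 else s0^a) * B3 (s0,0,0) \<noteq> 0"
   and mu0: "\<not>(\<exists>r::rat. r>0 \<and> (if s0 = 0 then 1 else s0^a) * B2 (s0,0,0) =
              ((if s0 = 0 then 1 else s0^a) * B3 (s0,0,0)) * of_rat r)"
   and A0: "s0 * B1 (s0,0,0) = 0"
  shows "simple_corner_at g (s0,0,0)"
proof -
  define \<sigma> where "\<sigma> p = (snd (snd p), fst (snd p), fst p)" for p :: c3
  have ss: "\<sigma> (\<sigma> p) = p" for p by (simp add: \<sigma>_def)
  have hs: "holo3map UNIV \<sigma>" unfolding \<sigma>_def by (rule holo3map_perm)
  define N' where "N' = \<sigma> -` N"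
  have oN': "open N'" unfolding N'_def by (rule open_vimage[OF oN]) (use holo3map_cont[OF hs] in auto)
  have compN: "holo3 N B \<Longrightarrow> holo3 N' (\<lambda>p. B (\<sigma> p))" for B
    unfolding \<sigma>_def by (rule holo3_comp) (use oN' in \<open>auto simp: N'_def \<sigma>_def intro!: holo3_c1 holo3_c2 holo3_c3\<close>)
  have "simple_corner_at (\<lambda>p. \<sigma> (g (\<sigma> p))) (0,0,s0)"
  proof (rule point_lemma[OF oN', where ?e1.0=k and ?e2.0=b and ?e3.0=a and ?B1.0="\<lambda>p. B3 (\<sigma> p)" and ?B2.0="\<lambda>p. B2 (\<sigma> p)"
        and ?A3.0="\<lambda>p. snd (snd p) * B1 (\<sigma> p)"])
    show "(0,0,s0) \<in> N'" using qN by (simp add: N'_def \<sigma>_def)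
    fix X Y Z assume "(X,Y,Z) \<in> N'"
    then have "(Z,Y,X) \<in> N" by (simp add: N'_def \<sigma>_def)
    from g[OF this] show "\<sigma> (g (\<sigma> (X,Y,Z))) = (X + X^k*Y^b*Z^a * (X * B3 (\<sigma> (X,Y,Z))),
            Y + X^k*Y^b*Z^a * (Y * B2 (\<sigma> (X,Y,Z))), Z + X^k*Y^b*Z^a * (snd (snd (X,Y,Z)) * B1 (\<sigma> (X,Y,Z))))"
      by (simp add: \<sigma>_def ac_simps)
  next
    show "holo3 N' (\<lambda>p. B3 (\<sigma> p))" "holo3 N' (\<lambda>p. B2 (\<sigma> p))" "holo3 N' (\<lambda>p. snd (snd p) * B1 (\<sigma> p))"
      using hB oN' by (auto intro!: compN holo3_mult holo3_c3)
    show "k > 0" "b > 0" using e by auto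
    show "(if s0 = 0 then 1 else s0^a) * B3 (\<sigma> (0,0,s0)) \<noteq> 0" using lam0 by (simp add: \<sigma>_def)
    show "\<not>(\<exists>r::rat. r>0 \<and> (if s0 = 0 then 1 else s0^a) * B2 (\<sigma> (0,0,s0)) =
              ((if s0 = 0 then 1 else s0^a) * B3 (\<sigma> (0,0,s0))) * of_rat r)" using mu0 by (simp add: \<sigma>_def)
    show "snd (snd (0,0,s0)) * B1 (\<sigma> (0,0,s0)) = 0" using A0 by (simp add: \<sigma>_def)
    show "\<exists>B3. holo3 N' B3 \<and> (\<forall>p\<in>N'. snd (snd p) * B1 (\<sigma> p) = snd (snd p) * B3 p)"
      using compN[OF hB(1)] by blast
  qed
  from perm_lemma[OF this ss ss hs hs] show ?thesis by (simp add: \<sigma>_def)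
qed

lemma perm2_sc:
  fixes g :: "c3 \<Rightarrow> c3"
  assumes oN: "open N" and qN: "(0,u0,0) \<in> N"
   and g: "\<And>s u w. (s,u,w) \<in> N \<Longrightarrow> g (s,u,w) = (s + s^a*u^b*w^k * (s * B1 (s,u,w)),
            u + s^a*u^b*w^k * (u * B2 (s,u,w)), w + s^a*u^b*w^k * (w * B3 (s,u,w)))"
   and e: "a > 0" "b > 0" "k > 0"
   and hB: "holo3 N B1" "holo3 N B2" "holo3 N B3"
   and lam0: "(if u0 = 0 then 1 else u0^b) * B1 (0,u0,0) \<noteq> 0"
   and mu0: "\<not>(\<exists>r::rat. r>0 \<and> (if u0 = 0 then 1 else u0^b) * B3 (0,u0,0) =
              ((if u0 = 0 then 1 else u0^b) * B1 (0,u0,0)) * of_rat r)"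
   and A0: "u0 * B2 (0,u0,0) = 0"
  shows "simple_corner_at g (0,u0,0)"
proof -
  define \<sigma> where "\<sigma> p = (fst p, snd (snd p), fst (snd p))" for p :: c3
  have ss: "\<sigma> (\<sigma> p) = p" for p by (simp add: \<sigma>_def)
  have hs: "holo3map UNIV \<sigma>" unfolding \<sigma>_def by (rule holo3map_perm)
  define N' where "N' = \<sigma> -` N"
  have oN': "open N'" unfolding N'_def by (rule open_vimage[OF oN]) (use holo3map_cont[OF hs] in auto)
  have compN: "holo3 N B \<Longrightarrow> holo3 N' (\<lambda>p. B (\<sigma> p))" for B
    unfolding \<sigma>_def by (rule holo3_comp) (use oN' in \<open>auto simp: N'_def \<sigma>_def intro!: holo3_c1 holo3_c2 holo3_c3\<close>)
  have "simple_corner_at (\<lambda>p. \<sigma> (g (\<sigma> p))) (0,0,u0)"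
  proof (rule point_lemma[OF oN', where ?e1.0=a and ?e2.0=k and ?e3.0=b and ?B1.0="\<lambda>p. B1 (\<sigma> p)" and ?B2.0="\<lambda>p. B3 (\<sigma> p)"
        and ?A3.0="\<lambda>p. snd (snd p) * B2 (\<sigma> p)"])
    show "(0,0,u0) \<in> N'" using qN by (simp add: N'_def \<sigma>_def)
    fix X Y Z assume "(X,Y,Z) \<in> N'"
    then have "(X,Z,Y) \<in> N" by (simp add: N'_def \<sigma>_def)
    from g[OF this] show "\<sigma> (g (\<sigma> (X,Y,Z))) = (X + X^a*Y^k*Z^b * (X * B1 (\<sigma> (X,Y,Z))),
            Y + X^a*Y^k*Z^b * (Y * B3 (\<sigma> (X,Y,Z))), Z + X^a*Y^k*Z^b * (snd (snd (X,Y,Z)) * B2 (\<sigma> (X,Y,Z))))"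
      by (simp add: \<sigma>_def ac_simps)
  next
    show "holo3 N' (\<lambda>p. B1 (\<sigma> p))" "holo3 N' (\<lambda>p. B3 (\<sigma> p))" "holo3 N' (\<lambda>p. snd (snd p) * B2 (\<sigma> p))"
      using hB oN' by (auto intro!: compN holo3_mult holo3_c3)
    show "a > 0" "k > 0" using e by auto
    show "(if u0 = 0 then 1 else u0^b) * B1 (\<sigma> (0,0,u0)) \<noteq> 0" using lam0 by (simp add: \<sigma>_def)
    show "\<not>(\<exists>r::rat. r>0 \<and> (if u0 = 0 then 1 else u0^b) * B3 (\<sigma> (0,0,u0)) =
              ((if u0 = 0 then 1 else u0^b) * B1 (\<sigma> (0,0,u0))) * of_rat r)" using mu0 by (simp add: \<sigma>_def)
    show "snd (snd (0,0,u0)) * B2 (\<sigma> (0,0,u0)) = 0" using A0 by (simp add: \<sigma>_def)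
    show "\<exists>B3. holo3 N' B3 \<and> (\<forall>p\<in>N'. snd (snd p) * B2 (\<sigma> p) = snd (snd p) * B3 p)"
      using compN[OF hB(2)] by blast
  qed
  from perm_lemma[OF this ss ss hs hs] show ?thesis by (simp add: \<sigma>_def)
qed

lemma perm3_sc:
  fixes g :: "c3 \<Rightarrow> c3"
  assumes oN: "open N" and qN: "(0,0,0) \<in> N"
   and g: "\<And>s u w. (s,u,w) \<in> N \<Longrightarrow> g (s,u,w) = (s + s^a*u^b*w^k * (s * B1 (s,u,w)),
            u + s^a*u^b*w^k * (u * B2 (s,u,w)), w + s^a*u^b*w^k * (w * B3 (s,u,w)))"
   and e: "a > 0" "b > 0" "k > 0"
   and hB: "holo3 N B1" "holo3 N B2" "holo3 N B3"
   and lam0: "B3 (0,0,0) \<noteq> 0"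
   and mu0: "\<not>(\<exists>r::rat. r>0 \<and> B1 (0,0,0) = B3 (0,0,0) * of_rat r)"
  shows "simple_corner_at g (0,0,0)"
proof -
  define \<sigma> where "\<sigma> p = (fst (snd p), snd (snd p), fst p)" for p :: c3
  define \<sigma>' where "\<sigma>' p = (snd (snd p), fst p, fst (snd p))" for p :: c3
  have ss: "\<sigma>' (\<sigma> p) = p" "\<sigma> (\<sigma>' p) = p" for p by (simp_all add: \<sigma>_def \<sigma>'_def)
  have hs: "holo3map UNIV \<sigma>" "holo3map UNIV \<sigma>'" unfolding \<sigma>_def \<sigma>'_def by (rule holo3map_perm)+
  define N' where "N' = \<sigma> -` N"
  have oN': "open N'" unfolding N'_def by (rule open_vimage[OF oN]) (use holo3map_cont[OF hs(1)] in auto)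
  have compN: "holo3 N B \<Longrightarrow> holo3 N' (\<lambda>p. B (\<sigma> p))" for B
    unfolding \<sigma>_def by (rule holo3_comp) (use oN' in \<open>auto simp: N'_def \<sigma>_def intro!: holo3_c1 holo3_c2 holo3_c3\<close>)
  have "simple_corner_at (\<lambda>p. \<sigma>' (g (\<sigma> p))) (0,0,0)"
  proof (rule point_lemma[OF oN', where ?e1.0=k and ?e2.0=a and ?e3.0=b and ?B1.0="\<lambda>p. B3 (\<sigma> p)" and ?B2.0="\<lambda>p. B1 (\<sigma> p)"
        and ?A3.0="\<lambda>p. snd (snd p) * B2 (\<sigma> p)"])
    show "(0,0,0) \<in> N'" using qN by (simp add: N'_def \<sigma>_def)
    fix X Y Z assume "(X,Y,Z) \<in> N'"
    then have "(Y,Z,X) \<in> N" by (simp add: N'_def \<sigma>_def)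
    from g[OF this] show "\<sigma>' (g (\<sigma> (X,Y,Z))) = (X + X^k*Y^a*Z^b * (X * B3 (\<sigma> (X,Y,Z))),
            Y + X^k*Y^a*Z^b * (Y * B1 (\<sigma> (X,Y,Z))), Z + X^k*Y^a*Z^b * (snd (snd (X,Y,Z)) * B2 (\<sigma> (X,Y,Z))))"
      by (simp add: \<sigma>_def \<sigma>'_def ac_simps)
  next
    show "holo3 N' (\<lambda>p. B3 (\<sigma> p))" "holo3 N' (\<lambda>p. B1 (\<sigma> p))" "holo3 N' (\<lambda>p. snd (snd p) * B2 (\<sigma> p))"
      using hB oN' by (auto intro!: compN holo3_mult holo3_c3)
    show "k > 0" "a > 0" using e by auto
    show "(if (0::complex) = 0 then 1 else 0^b) * B3 (\<sigma> (0,0,0)) \<noteq> 0" using lam0 by (simp add: \<sigma>_def)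
    show "\<not>(\<exists>r::rat. r>0 \<and> (if (0::complex) = 0 then 1 else 0^b) * B1 (\<sigma> (0,0,0)) =
              ((if (0::complex) = 0 then 1 else 0^b) * B3 (\<sigma> (0,0,0))) * of_rat r)" using mu0 by (simp add: \<sigma>_def)
    show "snd (snd (0,0,0::complex)) * B2 (\<sigma> (0,0,0)) = 0" by simp
    show "\<exists>B3. holo3 N' B3 \<and> (\<forall>p\<in>N'. snd (snd p) * B2 (\<sigma> p) = snd (snd p) * B3 p)"
      using compN[OF hB(2)] by blast
  qed
  from perm_lemma[OF this ss hs] show ?thesis by (simp add: \<sigma>_def)
qed

lemma id_sc:
  fixes g :: "c3 \<Rightarrow> c3"
  assumes oN: "open N" and qN: "(0,0,0) \<in> N"
   and g: "\<And>s u w. (s,u,w) \<in> N \<Longrightarrow> g (s,u,w) = (s + s^a*u^b*w^k * (s * B1 (s,u,w)),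
            u + s^a*u^b*w^k * (u * B2 (s,u,w)), w + s^a*u^b*w^k * (w * B3 (s,u,w)))"
   and e: "a > 0" "b > 0" "k > 0"
   and hB: "holo3 N B1" "holo3 N B2" "holo3 N B3"
   and lam0: "B1 (0,0,0) \<noteq> 0"
   and mu0: "\<not>(\<exists>r::rat. r>0 \<and> B2 (0,0,0) = B1 (0,0,0) * of_rat r)"
  shows "simple_corner_at g (0,0,0)"
proof (rule point_lemma[OF oN qN, where ?e1.0=a and ?e2.0=b and ?e3.0=k and ?B1.0=B1 and ?B2.0=B2 and ?A3.0="\<lambda>p. snd (snd p) * B3 p"])
  show "holo3 N (\<lambda>p. snd (snd p) * B3 p)" using hB oN by (auto intro!: holo3_mult holo3_c3)
qed (use assms in auto)

lemma rat_M1: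
  assumes "\<not>(\<exists>r::rat. r>0 \<and> mu = lam * of_rat r)" "W \<noteq> 0"
  shows "\<not>(\<exists>r::rat. r>0 \<and> W * (mu - lam) = W * lam * of_rat r)"
proof
  assume "\<exists>r::rat. r>0 \<and> W * (mu - lam) = W * lam * of_rat r"
  then obtain r :: rat where r: "r > 0" "W * (mu - lam) = W * lam * of_rat r" by blast
  then have "mu - lam = lam * of_rat r" using assms(2) by (simp add: mult.assoc)
  then have "mu = lam * of_rat (1 + r)" by (simp add: of_rat_add algebra_simps)
  moreover have "1 + r > 0" using r by simp
  ultimately show False using assms(1) by blast
qed

lemma rat_M2:
  assumes "\<not>(\<exists>r::rat. r>0 \<and> mu = lam * of_rat r)" "W \<noteq> 0"
  shows "\<not>(\<exists>r::rat. r>0 \<and> W * mu = W * (lam - mu) * of_rat r)"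
proof
  assume "\<exists>r::rat. r>0 \<and> W * mu = W * (lam - mu) * of_rat r"
  then obtain r :: rat where r: "r > 0" "W * mu = W * (lam - mu) * of_rat r" by blast
  then have e: "mu = (lam - mu) * of_rat r" using assms(2) by (simp add: mult.assoc)
  have e2: "mu * of_rat (1 + r) = lam * of_rat r" using e by (simp add: of_rat_add algebra_simps)
  have nz: "of_rat (1 + r) \<noteq> (0::complex)" using r by simp
  have "mu = lam * of_rat r / of_rat (1 + r)" using e2 nz by (simp add: nonzero_eq_divide_eq)
  then have "mu = lam * of_rat (r / (1 + r))" by (simp add: of_rat_divide)
  moreover have "r / (1 + r) > 0" using r by simp
  ultimately show False using assms(1) by blast
qed

lemma rat_M3:
  assumes "\<not>(\<exists>r::rat. r>0 \<and> mu = lam * of_rat r)" "ga \<noteq> 0"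
    "\<exists>r::rat. r>0 \<and> mu - ga = ga * of_rat r"
  shows "\<not>(\<exists>r::rat. r>0 \<and> lam - ga = ga * of_rat r)"
proof
  assume "\<exists>r::rat. r>0 \<and> lam - ga = ga * of_rat r"
  then obtain r' :: rat where r': "r' > 0" "lam - ga = ga * of_rat r'" by blast
  obtain r :: rat where r: "r > 0" "mu - ga = ga * of_rat r" using assms(3) by blast
  have m: "mu = ga * of_rat (1 + r)" "lam = ga * of_rat (1 + r')" using r r' by (simp_all add: of_rat_add algebra_simps)
  have nz: "of_rat (1 + r') \<noteq> (0::complex)" using r' by simp
  have "mu = lam * of_rat ((1 + r) / (1 + r'))" using m nz by (simp add: of_rat_divide field_simps)
  moreover have "(1 + r) / (1 + r') > 0" using r r' by simp
  ultimately show False using assms(1) by blast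
qed

lemma sing_dir_iff:
  assumes SC: "simple_corner_form f a b c lam mu P Q R U"
  shows "sing_dir f (\<lambda>(x, y, z). x ^ a * y ^ b * z ^ c) v \<longleftrightarrow> v \<noteq> 0 \<and>
     (\<exists>l'. Lin lam mu (deriv (\<lambda>t. R (t, 0, 0)) 0) (deriv (\<lambda>t. R (0, t, 0)) 0) (deriv (\<lambda>t. R (0, 0, t)) 0) v = smul3 l' v)"
proof
  assume "sing_dir f (\<lambda>(x, y, z). x ^ a * y ^ b * z ^ c) v"
  then obtain G U' where "v \<noteq> 0" "open U'" "0 \<in> U'" "holo3map U' G"
    "\<forall>p\<in>U'. f p - p = smul3 ((\<lambda>(x, y, z). x ^ a * y ^ b * z ^ c) p) (G p)"
    "\<exists>l'. lowest_hom G v = smul3 l' v" unfolding sing_dir_def by blast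
  then show "v \<noteq> 0 \<and> (\<exists>l'. Lin lam mu (deriv (\<lambda>t. R (t, 0, 0)) 0) (deriv (\<lambda>t. R (0, t, 0)) 0) (deriv (\<lambda>t. R (0, 0, t)) 0) v = smul3 l' v)"
    using lowest_hom_eq[OF SC] by metis
next
  assume A: "v \<noteq> 0 \<and> (\<exists>l'. Lin lam mu (deriv (\<lambda>t. R (t, 0, 0)) 0) (deriv (\<lambda>t. R (0, t, 0)) 0) (deriv (\<lambda>t. R (0, 0, t)) 0) v = smul3 l' v)"
  note sc = sc_parts[OF SC]
  have "\<forall>p\<in>U. f p - p = smul3 ((\<lambda>(x, y, z). x ^ a * y ^ b * z ^ c) p) (G0 lam mu P Q R p)"
    using G0_eq[OF SC] by blast
  moreover have "lowest_hom (G0 lam mu P Q R) = Lin lam mu (deriv (\<lambda>t. R (t, 0, 0)) 0) (deriv (\<lambda>t. R (0, t, 0)) 0) (deriv (\<lambda>t. R (0, 0, t)) 0)"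
    by (rule lowest_hom_eq[OF SC sc(1) sc(2) G0_holo[OF SC]]) (use G0_eq[OF SC] in blast)
  ultimately show "sing_dir f (\<lambda>(x, y, z). x ^ a * y ^ b * z ^ c) v"
    unfolding sing_dir_def using A sc(1) sc(2) G0_holo[OF SC] by metis
qed

lemma chart1_lift:
  assumes SC: "simple_corner_form f a b c lam mu P Q R U"
    and eig: "deriv (\<lambda>t. R (t,0,0)) 0 + deriv (\<lambda>t. R (0,0,t)) 0 * w0 = lam * w0"
  shows "lift_simple_corner_at f 1 (0,0,w0)"
proof -
  note sc = sc_parts[OF SC]
  obtain N \<rho> where N: "open N" "(0,0,w0) \<in> N" "holo3 N \<rho>" "\<forall>p\<in>N. b1 p \<in> U" "\<forall>p\<in>N. R (b1 p) = fst p * \<rho> p"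
      "\<forall>p\<in>N. 1 + E1 a b c p * (lam + P (b1 p)) \<noteq> 0"
    and Nc: "c > 0 \<longrightarrow> (\<exists>R'. holo3 U R' \<and> (\<forall>p\<in>N. \<rho> p = snd (snd p) * R' (b1 p)))"
    using chart1_exists[OF SC, of 0 w0] by blast
  note L = lift1_props[OF SC N(1) N(3) N(4) N(5) N(6)]
  have bq: "b1 (0,0,w0) = 0" by (simp add: b1_def zero_prod_def)
  have Eq: "E1 a b c (0,0,w0) = 0" using sc(3) by (simp add: E1_def)
  have rq: "\<rho> (0,0,w0) = deriv (\<lambda>t. R (t,0,0)) 0 + deriv (\<lambda>t. R (0,0,t)) 0 * w0"
    using L(7)[OF N(2)] by simp
  have W: "(if w0 = 0 then 1 else w0 ^ c) \<noteq> 0" by simp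
  have sc_g: "simple_corner_at (lift1 a b c lam mu P Q \<rho>) (0,0,w0)"
  proof (rule point_lemma[OF N(1) N(2), where ?e1.0 = "a+b+c" and ?e2.0 = b and ?e3.0 = c and ?B1.0 = "\<lambda>p. lam + P (b1 p)"
      and ?B2.0 = "\<lambda>p. (mu + Q (b1 p) - lam - P (b1 p)) / (1 + E1 a b c p * (lam + P (b1 p)))"
      and ?A3.0 = "\<lambda>p. (\<rho> p - snd (snd p) * (lam + P (b1 p))) / (1 + E1 a b c p * (lam + P (b1 p)))"])
    show "\<And>s u w. (s,u,w) \<in> N \<Longrightarrow> lift1 a b c lam mu P Q \<rho> (s,u,w) = (s + s^(a+b+c)*u^b*w^c * (s * (lam + P (b1 (s,u,w)))),
       u + s^(a+b+c)*u^b*w^c * (u * ((mu + Q (b1 (s,u,w)) - lam - P (b1 (s,u,w))) / (1 + E1 a b c (s,u,w) * (lam + P (b1 (s,u,w)))))),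
       w + s^(a+b+c)*u^b*w^c * ((\<rho> (s,u,w) - snd (snd (s,u,w)) * (lam + P (b1 (s,u,w)))) / (1 + E1 a b c (s,u,w) * (lam + P (b1 (s,u,w))))))"
      by (rule L(3))
    show "a + b + c > 0" "b > 0" using sc by auto
    show "holo3 N (\<lambda>p. lam + P (b1 p))" "holo3 N (\<lambda>p. (mu + Q (b1 p) - lam - P (b1 p)) / (1 + E1 a b c p * (lam + P (b1 p))))"
      "holo3 N (\<lambda>p. (\<rho> p - snd (snd p) * (lam + P (b1 p))) / (1 + E1 a b c p * (lam + P (b1 p))))"
      using L(4,5,6) by auto
    show "(if w0 = 0 then 1 else w0 ^ c) * (lam + P (b1 (0,0,w0))) \<noteq> 0" using W sc(5) sc(10) bq by simp
    show "\<not> (\<exists>r. 0 < r \<and> (if w0 = 0 then 1 else w0 ^ c) * ((mu + Q (b1 (0,0,w0)) - lam - P (b1 (0,0,w0))) / (1 + E1 a b c (0,0,w0) * (lam + P (b1 (0,0,w0))))) =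
            (if w0 = 0 then 1 else w0 ^ c) * (lam + P (b1 (0,0,w0))) * of_rat r)"
      using rat_M1[OF sc(6) W] sc(10) sc(11) bq Eq by simp
    show "(\<rho> (0,0,w0) - snd (snd (0,0,w0)) * (lam + P (b1 (0,0,w0)))) / (1 + E1 a b c (0,0,w0) * (lam + P (b1 (0,0,w0)))) = 0"
      using rq eig sc(10) bq Eq by (simp add: algebra_simps)
    assume w: "w0 = 0" "c > 0"
    obtain R' where R': "holo3 U R'" "\<forall>p\<in>N. \<rho> p = snd (snd p) * R' (b1 p)" using Nc w by blast
    have hP: "holo3 N (\<lambda>p. P (b1 p))" "holo3 N (\<lambda>p. R' (b1 p))"
      using holo3_b1comp[OF sc(7) N(1)] holo3_b1comp[OF R'(1) N(1)] N(4) by auto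
    show "\<exists>B3. holo3 N B3 \<and> (\<forall>p\<in>N. (\<rho> p - snd (snd p) * (lam + P (b1 p))) / (1 + E1 a b c p * (lam + P (b1 p))) = snd (snd p) * B3 p)"
    proof (intro exI conjI ballI)
      show "holo3 N (\<lambda>p. (R' (b1 p) - (lam + P (b1 p))) / (1 + E1 a b c p * (lam + P (b1 p))))"
        using N(6) by (intro holo3_divide holo3_diff holo3_add holo3_mult holo3_const N(1) hP holo3_E1) auto
      fix p assume "p \<in> N"
      then show "(\<rho> p - snd (snd p) * (lam + P (b1 p))) / (1 + E1 a b c p * (lam + P (b1 p))) =
          snd (snd p) * ((R' (b1 p) - (lam + P (b1 p))) / (1 + E1 a b c p * (lam + P (b1 p))))"
        using R'(2) by (simp add: right_diff_distrib)
    qed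
  qed
  show ?thesis unfolding lift_simple_corner_at_def using N(1,2) L(1) L(2) sc_g by blast
qed

lemma chart2_lift:
  assumes SC: "simple_corner_form f a b c lam mu P Q R U"
    and eig: "deriv (\<lambda>t. R (0,t,0)) 0 + deriv (\<lambda>t. R (0,0,t)) 0 * w0 = mu * w0"
  shows "lift_simple_corner_at f 2 (0,0,w0)"
proof -
  note sc = sc_parts[OF SC]
  obtain N \<rho> where N: "open N" "(0,0,w0) \<in> N" "holo3 N \<rho>" "\<forall>p\<in>N. b2 p \<in> U" "\<forall>p\<in>N. R (b2 p) = fst (snd p) * \<rho> p"
      "\<forall>p\<in>N. 1 + E2 a b c p * (mu + Q (b2 p)) \<noteq> 0"
    and Nc: "c > 0 \<longrightarrow> (\<exists>R'. holo3 U R' \<and> (\<forall>p\<in>N. \<rho> p = snd (snd p) * R' (b2 p)))"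
    using chart2_exists[OF SC, of 0 w0] by blast
  note L = lift2_props[OF SC N(1) N(3) N(4) N(5) N(6)]
  have bq: "b2 (0,0,w0) = 0" by (simp add: b2_def zero_prod_def)
  have Eq: "E2 a b c (0,0,w0) = 0" using sc(3) by (simp add: E2_def)
  have rq: "\<rho> (0,0,w0) = deriv (\<lambda>t. R (0,t,0)) 0 + deriv (\<lambda>t. R (0,0,t)) 0 * w0"
    using L(7)[OF N(2)] by simp
  have W: "(if w0 = 0 then 1 else w0 ^ c) \<noteq> 0" by simp
  have sc_g: "simple_corner_at (lift2 a b c lam mu P Q \<rho>) (0,0,w0)"
  proof (rule point_lemma[OF N(1) N(2), where ?e1.0 = a and ?e2.0 = "a+b+c" and ?e3.0 = c
      and ?B1.0 = "\<lambda>p. (lam + P (b2 p) - mu - Q (b2 p)) / (1 + E2 a b c p * (mu + Q (b2 p)))"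
      and ?B2.0 = "\<lambda>p. mu + Q (b2 p)"
      and ?A3.0 = "\<lambda>p. (\<rho> p - snd (snd p) * (mu + Q (b2 p))) / (1 + E2 a b c p * (mu + Q (b2 p)))"])
    show "\<And>s u w. (s,u,w) \<in> N \<Longrightarrow> lift2 a b c lam mu P Q \<rho> (s,u,w) =
       (s + s^a*u^(a+b+c)*w^c * (s * ((lam + P (b2 (s,u,w)) - mu - Q (b2 (s,u,w))) / (1 + E2 a b c (s,u,w) * (mu + Q (b2 (s,u,w)))))),
       u + s^a*u^(a+b+c)*w^c * (u * (mu + Q (b2 (s,u,w)))),
       w + s^a*u^(a+b+c)*w^c * ((\<rho> (s,u,w) - snd (snd (s,u,w)) * (mu + Q (b2 (s,u,w)))) / (1 + E2 a b c (s,u,w) * (mu + Q (b2 (s,u,w))))))"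
      by (rule L(3))
    show "a > 0" "a + b + c > 0" using sc by auto
    show "holo3 N (\<lambda>p. (lam + P (b2 p) - mu - Q (b2 p)) / (1 + E2 a b c p * (mu + Q (b2 p))))"
      "holo3 N (\<lambda>p. mu + Q (b2 p))"
      "holo3 N (\<lambda>p. (\<rho> p - snd (snd p) * (mu + Q (b2 p))) / (1 + E2 a b c p * (mu + Q (b2 p))))"
      using L(4,5,6) by auto
    have ml: "lam - mu \<noteq> 0" using mu_ne_lam[OF sc(6)] by simp
    show "(if w0 = 0 then 1 else w0 ^ c) * ((lam + P (b2 (0,0,w0)) - mu - Q (b2 (0,0,w0))) / (1 + E2 a b c (0,0,w0) * (mu + Q (b2 (0,0,w0))))) \<noteq> 0"
      using W ml sc(10) sc(11) bq Eq by simp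
    show "\<not> (\<exists>r. 0 < r \<and> (if w0 = 0 then 1 else w0 ^ c) * (mu + Q (b2 (0,0,w0))) =
            (if w0 = 0 then 1 else w0 ^ c) * ((lam + P (b2 (0,0,w0)) - mu - Q (b2 (0,0,w0))) / (1 + E2 a b c (0,0,w0) * (mu + Q (b2 (0,0,w0))))) * of_rat r)"
      using rat_M2[OF sc(6) W] sc(10) sc(11) bq Eq by simp
    show "(\<rho> (0,0,w0) - snd (snd (0,0,w0)) * (mu + Q (b2 (0,0,w0)))) / (1 + E2 a b c (0,0,w0) * (mu + Q (b2 (0,0,w0)))) = 0"
      using rq eig sc(11) bq Eq by (simp add: algebra_simps)
    assume w: "w0 = 0" "c > 0"
    obtain R' where R': "holo3 U R'" "\<forall>p\<in>N. \<rho> p = snd (snd p) * R' (b2 p)" using Nc w by blast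
    have hP: "holo3 N (\<lambda>p. Q (b2 p))" "holo3 N (\<lambda>p. R' (b2 p))"
      using holo3_b2comp[OF sc(8) N(1)] holo3_b2comp[OF R'(1) N(1)] N(4) by auto
    show "\<exists>B3. holo3 N B3 \<and> (\<forall>p\<in>N. (\<rho> p - snd (snd p) * (mu + Q (b2 p))) / (1 + E2 a b c p * (mu + Q (b2 p))) = snd (snd p) * B3 p)"
    proof (intro exI conjI ballI)
      show "holo3 N (\<lambda>p. (R' (b2 p) - (mu + Q (b2 p))) / (1 + E2 a b c p * (mu + Q (b2 p))))"
        using N(6) by (intro holo3_divide holo3_diff holo3_add holo3_mult holo3_const N(1) hP holo3_E2) auto
      fix p assume "p \<in> N"
      then show "(\<rho> p - snd (snd p) * (mu + Q (b2 p))) / (1 + E2 a b c p * (mu + Q (b2 p))) =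
          snd (snd p) * ((R' (b2 p) - (mu + Q (b2 p))) / (1 + E2 a b c p * (mu + Q (b2 p))))"
        using R'(2) by (simp add: right_diff_distrib)
    qed
  qed
  show ?thesis unfolding lift_simple_corner_at_def using N(1,2) L(1) L(2) sc_g by blast
qed

lemma chart3_lift:
  assumes SC: "simple_corner_form f a b c lam mu P Q R U"
    and h1: "s0 \<noteq> 0 \<Longrightarrow> u0 = 0 \<and> deriv (\<lambda>t. R (t,0,0)) 0 * s0 + deriv (\<lambda>t. R (0,0,t)) 0 = lam"
    and h2: "u0 \<noteq> 0 \<Longrightarrow> s0 = 0 \<and> deriv (\<lambda>t. R (0,t,0)) 0 * u0 + deriv (\<lambda>t. R (0,0,t)) 0 = mu"
  shows "lift_simple_corner_at f 3 (s0,u0,0)"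
proof -
  note sc = sc_parts[OF SC]
  define al where "al = deriv (\<lambda>t. R (t,0,0)) 0"
  define be where "be = deriv (\<lambda>t. R (0,t,0)) 0"
  define ga where "ga = deriv (\<lambda>t. R (0,0,t)) 0"
  obtain N \<rho> where N: "open N" "(s0,u0,0) \<in> N" "holo3 N \<rho>" "\<forall>p\<in>N. b3 p \<in> U" "\<forall>p\<in>N. R (b3 p) = snd (snd p) * \<rho> p"
      "\<forall>p\<in>N. 1 + E3 a b c p * \<rho> p \<noteq> 0"
    using chart3_exists[OF SC, of s0 u0] by blast
  note L = lift3_props[OF SC N(1) N(3) N(4) N(5) N(6)]
  define B1 where "B1 = (\<lambda>p. (lam + P (b3 p) - \<rho> p) / (1 + E3 a b c p * \<rho> p))"
  define B2 where "B2 = (\<lambda>p. (mu + Q (b3 p) - \<rho> p) / (1 + E3 a b c p * \<rho> p))"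
  define g where "g = lift3 a b c lam mu P Q \<rho>"
  have gf: "\<And>s u w. (s,u,w) \<in> N \<Longrightarrow> g (s,u,w) = (s + s^a*u^b*w^(a+b+c) * (s * B1 (s,u,w)),
            u + s^a*u^b*w^(a+b+c) * (u * B2 (s,u,w)), w + s^a*u^b*w^(a+b+c) * (w * \<rho> (s,u,w)))"
    unfolding B1_def B2_def g_def by (rule L(3))
  have hB: "holo3 N B1" "holo3 N B2" unfolding B1_def B2_def by (rule L(4), rule L(5))
  have e: "a > 0" "b > 0" "a+b+c > 0" using sc by auto
  have bq: "b3 (s0,u0,0) = 0" by (simp add: b3_def zero_prod_def)
  have Eq: "E3 a b c (s0,u0,0) = 0" using sc(3) by (simp add: E3_def)
  have rq: "\<rho> (s0,u0,0) = al * s0 + be * u0 + ga" using L(6)[OF N(2)] by (simp add: al_def be_def ga_def)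
  have B1q: "B1 (s0,u0,0) = lam - \<rho> (s0,u0,0)" using bq Eq sc(10) by (simp add: B1_def)
  have B2q: "B2 (s0,u0,0) = mu - \<rho> (s0,u0,0)" using bq Eq sc(11) by (simp add: B2_def)
  have scg: "simple_corner_at g (s0,u0,0)"
  proof (cases "s0 \<noteq> 0")
    case True
    then have u0: "u0 = 0" and ev: "al * s0 + ga = lam" using h1 by (auto simp: al_def ga_def)
    have W: "(if s0 = 0 then 1 else s0^a) \<noteq> 0" by simp
    show ?thesis unfolding u0
    proof (rule perm1_sc[OF N(1) _ gf e hB N(3)])
      show "(s0,0,0) \<in> N" using N(2) u0 by simp
      show "(if s0 = 0 then 1 else s0^a) * \<rho> (s0,0,0) \<noteq> 0" using rq ev u0 sc(5) True by simp
      show "\<not>(\<exists>r::rat. r>0 \<and> (if s0 = 0 then 1 else s0^a) * B2 (s0,0,0) =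
              ((if s0 = 0 then 1 else s0^a) * \<rho> (s0,0,0)) * of_rat r)"
        using rat_M1[OF sc(6) W] B2q rq ev u0 by simp
      show "s0 * B1 (s0,0,0) = 0" using B1q rq ev u0 by simp
    qed
  next
    case False
    then have s0: "s0 = 0" by simp
    show ?thesis
    proof (cases "u0 \<noteq> 0")
      case True
      then have ev: "be * u0 + ga = mu" using h2 by (auto simp: be_def ga_def)
      have W: "(if u0 = 0 then 1 else u0^b) \<noteq> 0" by simp
      have ml: "lam - mu \<noteq> 0" using mu_ne_lam[OF sc(6)] by simp
      show ?thesis unfolding s0
      proof (rule perm2_sc[OF N(1) _ gf e hB N(3)])
        show "(0,u0,0) \<in> N" using N(2) s0 by simp
        show "(if u0 = 0 then 1 else u0^b) * B1 (0,u0,0) \<noteq> 0" using B1q rq ev s0 ml True by simp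
        show "\<not>(\<exists>r::rat. r>0 \<and> (if u0 = 0 then 1 else u0^b) * \<rho> (0,u0,0) =
              ((if u0 = 0 then 1 else u0^b) * B1 (0,u0,0)) * of_rat r)"
          using rat_M2[OF sc(6) W] B1q rq ev s0 by simp
        show "u0 * B2 (0,u0,0) = 0" using B2q rq ev s0 by simp
      qed
    next
      case False
      then have u0: "u0 = 0" by simp
      have r0: "\<rho> (0,0,0) = ga" "B1 (0,0,0) = lam - ga" "B2 (0,0,0) = mu - ga" using rq B1q B2q s0 u0 by auto
      have N0: "(0,0,0) \<in> N" using N(2) s0 u0 by simp
      show ?thesis unfolding s0 u0
      proof (cases "ga = 0")
        case True
        show "simple_corner_at g (0,0,0)"
          by (rule id_sc[OF N(1) N0 gf e hB N(3)]) (use r0 True sc(5) sc(6) in auto)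
      next
        case gnz: False
        show "simple_corner_at g (0,0,0)"
        proof (cases "\<exists>r::rat. r>0 \<and> mu - ga = ga * of_rat r")
          case True
          show ?thesis
            by (rule perm3_sc[OF N(1) N0 gf e hB N(3)]) (use r0 gnz rat_M3[OF sc(6) gnz True] in auto)
        next
          case False
          show ?thesis
            by (rule perm1_sc[OF N(1) _ gf e hB N(3)]) (use r0 gnz False N0 in auto)
        qed
      qed
    qed
  qed
  show ?thesis unfolding lift_simple_corner_at_def using N(1,2) L(1) L(2) scg g_def by blast
qed

lemma eig_eqs:
  assumes "Lin lam mu al be ga (x,y,z) = smul3 l' (x,y,z)"
  shows "lam * x = l' * x" "mu * y = l' * y" "al * x + be * y + ga * z = l' * z"
  using assms by (auto simp: Lin_def smul3_def)

lemma eig_x: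
  assumes "Lin lam mu al be ga (x,y,z) = smul3 l' (x,y,z)" "x \<noteq> 0" "mu \<noteq> lam"
  shows "y = 0" "al * x + ga * z = lam * z"
proof -
  note e = eig_eqs[OF assms(1)]
  have l: "l' = lam" using e(1) assms(2) by simp
  have "(mu - lam) * y = 0" using e(2) l by (simp add: algebra_simps)
  then show y: "y = 0" using assms(3) by simp
  show "al * x + ga * z = lam * z" using e(3) l y by simp
qed

lemma eig_y:
  assumes "Lin lam mu al be ga (x,y,z) = smul3 l' (x,y,z)" "y \<noteq> 0" "mu \<noteq> lam"
  shows "x = 0" "be * y + ga * z = mu * z"
proof -
  note e = eig_eqs[OF assms(1)]
  have l: "l' = mu" using e(2) assms(2) by simp
  have "(lam - mu) * x = 0" using e(1) l by (simp add: algebra_simps)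
  then show x: "x = 0" using assms(3) by simp
  show "be * y + ga * z = mu * z" using e(3) l x by simp
qed

lemma eig_char:
  fixes lam mu al be ga x y z :: complex
  assumes ml: "mu \<noteq> lam" and v: "(x,y,z) \<noteq> 0"
  shows "(\<exists>l'. Lin lam mu al be ga (x,y,z) = smul3 l' (x,y,z)) \<longleftrightarrow>
     ((if al \<noteq> 0 \<or> lam - ga \<noteq> 0 then proj_eq (x,y,z) (lam - ga, 0, al) else y = 0)
      \<or> (if be \<noteq> 0 \<or> mu - ga \<noteq> 0 then proj_eq (x,y,z) (0, mu - ga, be) else x = 0)
      \<or> proj_eq (x,y,z) (0,0,1))"
proof
  assume "\<exists>l'. Lin lam mu al be ga (x,y,z) = smul3 l' (x,y,z)"
  then obtain l' where L: "Lin lam mu al be ga (x,y,z) = smul3 l' (x,y,z)" by blast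
  show "((if al \<noteq> 0 \<or> lam - ga \<noteq> 0 then proj_eq (x,y,z) (lam - ga, 0, al) else y = 0)
      \<or> (if be \<noteq> 0 \<or> mu - ga \<noteq> 0 then proj_eq (x,y,z) (0, mu - ga, be) else x = 0)
      \<or> proj_eq (x,y,z) (0,0,1))"
  proof (cases "x \<noteq> 0")
    case True
    note ex = eig_x[OF L True ml]
    have "if al \<noteq> 0 \<or> lam - ga \<noteq> 0 then proj_eq (x,y,z) (lam - ga, 0, al) else y = 0"
    proof (cases "lam - ga \<noteq> 0")
      case lg: True
      have "proj_eq (x,y,z) (lam - ga, 0, al)" unfolding proj_eq_def
      proof (intro exI conjI)
        show "x / (lam - ga) \<noteq> 0" using True lg by simp
        have "z = x / (lam - ga) * al" using ex(2) lg by (simp add: field_simps algebra_simps)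
        then show "(x,y,z) = smul3 (x / (lam - ga)) (lam - ga, 0, al)" using ex(1) lg by (simp add: smul3_def)
      qed
      then show ?thesis using lg by simp
    next
      case False
      then have "al = 0" using ex(2) True by (simp add: algebra_simps)
      then show ?thesis using False ex(1) by simp
    qed
    then show ?thesis by blast
  next
    case x0: False
    show ?thesis
    proof (cases "y \<noteq> 0")
      case True
      note ey = eig_y[OF L True ml]
      have "if be \<noteq> 0 \<or> mu - ga \<noteq> 0 then proj_eq (x,y,z) (0, mu - ga, be) else x = 0"
      proof (cases "mu - ga \<noteq> 0")
        case mg: True
        have "proj_eq (x,y,z) (0, mu - ga, be)" unfolding proj_eq_def
        proof (intro exI conjI)
          show "y / (mu - ga) \<noteq> 0" using True mg by simp
          have "z = y / (mu - ga) * be" using ey(2) mg by (simp add: field_simps algebra_simps)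
          then show "(x,y,z) = smul3 (y / (mu - ga)) (0, mu - ga, be)" using ey(1) mg by (simp add: smul3_def)
        qed
        then show ?thesis using mg by simp
      next
        case False
        then have "be = 0" using ey(2) True by (simp add: algebra_simps)
        then show ?thesis using False ey(1) by simp
      qed
      then show ?thesis by blast
    next
      case False
      then have "y = 0" "x = 0" "z \<noteq> 0" using x0 v by (auto simp: zero_prod_def)
      then have "proj_eq (x,y,z) (0,0,1)" unfolding proj_eq_def by (auto simp: smul3_def)
      then show ?thesis by blast
    qed
  qed
next
  assume A: "((if al \<noteq> 0 \<or> lam - ga \<noteq> 0 then proj_eq (x,y,z) (lam - ga, 0, al) else y = 0)
      \<or> (if be \<noteq> 0 \<or> mu - ga \<noteq> 0 then proj_eq (x,y,z) (0, mu - ga, be) else x = 0)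
      \<or> proj_eq (x,y,z) (0,0,1))"
  show "\<exists>l'. Lin lam mu al be ga (x,y,z) = smul3 l' (x,y,z)"
  proof (cases "if al \<noteq> 0 \<or> lam - ga \<noteq> 0 then proj_eq (x,y,z) (lam - ga, 0, al) else y = 0")
    case True
    show ?thesis
    proof (cases "al \<noteq> 0 \<or> lam - ga \<noteq> 0")
      case c: True
      then obtain t where "(x,y,z) = smul3 t (lam - ga, 0, al)" using True unfolding proj_eq_def by auto
      then have xyz: "x = t * (lam - ga)" "y = 0" "z = t * al" by (auto simp: smul3_def)
      show ?thesis by (intro exI[of _ lam]) (simp only: xyz Lin_def smul3_def fst_conv snd_conv, simp add: algebra_simps)
    next
      case c: False
      then have "y = 0" "al = 0" "lam = ga" using True by auto
      then show ?thesis by (intro exI[of _ lam]) (simp add: Lin_def smul3_def algebra_simps)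
    qed
  next
    case F1: False
    show ?thesis
    proof (cases "if be \<noteq> 0 \<or> mu - ga \<noteq> 0 then proj_eq (x,y,z) (0, mu - ga, be) else x = 0")
      case True
      show ?thesis
      proof (cases "be \<noteq> 0 \<or> mu - ga \<noteq> 0")
        case c: True
        then obtain t where "(x,y,z) = smul3 t (0, mu - ga, be)" using True unfolding proj_eq_def by auto
        then have xyz: "y = t * (mu - ga)" "x = 0" "z = t * be" by (auto simp: smul3_def)
        show ?thesis by (intro exI[of _ mu]) (simp only: xyz Lin_def smul3_def fst_conv snd_conv, simp add: algebra_simps)
      next
        case c: False
        then have "x = 0" "be = 0" "mu = ga" using True by auto
        then show ?thesis by (intro exI[of _ mu]) (simp add: Lin_def smul3_def algebra_simps)
      qed
    next
      case False
      then have "proj_eq (x,y,z) (0,0,1)" using A F1 by blast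
      then obtain t where "(x,y,z) = smul3 t (0,0,1)" unfolding proj_eq_def by auto
      then have "x = 0" "y = 0" "z = t" by (auto simp: smul3_def)
      then show ?thesis by (intro exI[of _ ga]) (simp add: Lin_def smul3_def)
    qed
  qed
qed

theorem proposition3p16:
  fixes f :: "c3 \<Rightarrow> c3" and a b c :: nat and lam mu :: complex
    and P Q R :: "c3 \<Rightarrow> complex" and U :: "c3 set"
  assumes "simple_corner_form f a b c lam mu P Q R U"
  defines "\<alpha> \<equiv> deriv (\<lambda>t. R (t, 0, 0)) 0"
      and "\<beta> \<equiv> deriv (\<lambda>t. R (0, t, 0)) 0"
      and "\<gamma> \<equiv> deriv (\<lambda>t. R (0, 0, t)) 0"
      and "l \<equiv> (\<lambda>(x, y, z). x ^ a * y ^ b * z ^ c)"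
  shows "(\<forall>v. sing_dir f l v \<longleftrightarrow>
            v \<noteq> 0 \<and>
            ((if \<alpha> \<noteq> 0 \<or> lam - \<gamma> \<noteq> 0 then proj_eq v (lam - \<gamma>, 0, \<alpha>)
              else fst (snd v) = 0)
             \<or> (if \<beta> \<noteq> 0 \<or> mu - \<gamma> \<noteq> 0 then proj_eq v (0, mu - \<gamma>, \<beta>)
              else fst v = 0)
             \<or> proj_eq v (0, 0, 1)))
       \<and> (\<forall>v. sing_dir f l v \<longrightarrow> exceptional a b c v)
       \<and> (\<forall>v. sing_dir f l v \<longrightarrow>
            (\<forall>i\<in>{1, 2, 3}. comp3 i v \<noteq> 0 \<longrightarrow> lift_simple_corner_at f i (chart_point i v)))"
proof -
  note SC = assms(1)
  note sc = sc_parts[OF SC]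
  have ml: "mu \<noteq> lam" using mu_ne_lam[OF sc(6)] .
  have SD: "sing_dir f l v \<longleftrightarrow> v \<noteq> 0 \<and> (\<exists>l'. Lin lam mu \<alpha> \<beta> \<gamma> v = smul3 l' v)" for v
    using sing_dir_iff[OF SC, of v] unfolding \<alpha>_def \<beta>_def \<gamma>_def l_def .
  have P1: "sing_dir f l v \<longleftrightarrow>
            v \<noteq> 0 \<and>
            ((if \<alpha> \<noteq> 0 \<or> lam - \<gamma> \<noteq> 0 then proj_eq v (lam - \<gamma>, 0, \<alpha>)
              else fst (snd v) = 0)
             \<or> (if \<beta> \<noteq> 0 \<or> mu - \<gamma> \<noteq> 0 then proj_eq v (0, mu - \<gamma>, \<beta>)
              else fst v = 0)
             \<or> proj_eq v (0, 0, 1))" for v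
  proof (cases "v = 0")
    case True then show ?thesis using SD by simp
  next
    case False
    obtain x y z where v: "v = (x,y,z)" by (cases v)
    show ?thesis using SD[of v] eig_char[OF ml False[unfolded v], of \<alpha> \<beta> \<gamma>] False unfolding v by simp
  qed
  have P2: "exceptional a b c v" if sd: "sing_dir f l v" for v
  proof -
    obtain x y z where v: "v = (x,y,z)" by (cases v)
    obtain l' where L: "Lin lam mu \<alpha> \<beta> \<gamma> (x,y,z) = smul3 l' (x,y,z)" using SD[of v] sd v by auto
    show ?thesis
    proof (cases "x = 0")
      case True then show ?thesis using sc(3) by (simp add: exceptional_def v)
    next
      case False then show ?thesis using eig_x[OF L False ml] sc(4) by (simp add: exceptional_def v)
    qed
  qed
  have P3: "lift_simple_corner_at f i (chart_point i v)" if sd: "sing_dir f l v" and i: "i \<in> {1,2,3}" and ci: "comp3 i v \<noteq> 0" for v i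
  proof -
    obtain x y z where v: "v = (x,y,z)" by (cases v)
    obtain l' where L: "Lin lam mu \<alpha> \<beta> \<gamma> (x,y,z) = smul3 l' (x,y,z)" using SD[of v] sd v by auto
    consider "i = 1" | "i = 2" | "i = 3" using i by auto
    then show ?thesis
    proof cases
      case 1
      then have x: "x \<noteq> 0" using ci by (simp add: comp3_def v)
      note ex = eig_x[OF L x ml]
      have cp1: "chart_point 1 v = (0, 0, z / x)" using 1 ex(1) by (simp add: chart_point_def v)
      have "\<alpha> + \<gamma> * (z / x) = lam * (z / x)" using ex(2) x by (simp add: field_simps)
      then show ?thesis unfolding 1 cp1 by (intro chart1_lift[OF SC]) (simp add: \<alpha>_def \<gamma>_def)
    next
      case 2
      then have y: "y \<noteq> 0" using ci by (simp add: comp3_def v)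
      note ey = eig_y[OF L y ml]
      have cp2: "chart_point 2 v = (0, 0, z / y)" using 2 ey(1) by (simp add: chart_point_def v)
      have "\<beta> + \<gamma> * (z / y) = mu * (z / y)" using ey(2) y by (simp add: field_simps)
      then show ?thesis unfolding 2 cp2 by (intro chart2_lift[OF SC]) (simp add: \<beta>_def \<gamma>_def)
    next
      case 3
      then have z: "z \<noteq> 0" using ci by (simp add: comp3_def v)
      have cp3: "chart_point 3 v = (x / z, y / z, 0)" using 3 by (simp add: chart_point_def v)
      show ?thesis unfolding 3 cp3
      proof (rule chart3_lift[OF SC])
        assume "x / z \<noteq> 0"
        then have x: "x \<noteq> 0" by simp
        note ex = eig_x[OF L x ml]
        show "y / z = 0 \<and> deriv (\<lambda>t. R (t, 0, 0)) 0 * (x / z) + deriv (\<lambda>t. R (0, 0, t)) 0 = lam"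
          using ex z unfolding \<alpha>_def[symmetric] \<gamma>_def[symmetric] by (simp add: field_simps)
      next
        assume "y / z \<noteq> 0"
        then have y: "y \<noteq> 0" by simp
        note ey = eig_y[OF L y ml]
        show "x / z = 0 \<and> deriv (\<lambda>t. R (0, t, 0)) 0 * (y / z) + deriv (\<lambda>t. R (0, 0, t)) 0 = mu"
          using ey z unfolding \<beta>_def[symmetric] \<gamma>_def[symmetric] by (simp add: field_simps)
      qed
    qed
  qed
  show ?thesis using P1 P2 P3 by blast
qed

end
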